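(* Let $\epsilon\in\{-1,0,1\}$, $f\in L^2(\Omega)$, and let $\mathbf u_h=(u_h,\hat u_h)\in\mathbf V_h$ be a solution of the H-IP problem. Then for all $\mathbf v_h=(v_h,\hat v_h)\in\mathbf V_h$, $$\langle\sigma(v_h),[\![\mathbf u_h]\!]\rangle_{\partial\mathcal T_h}=-\langle\{\kappa\nabla_hv_h\}^*_{\omega^\tau},[u_h]\rangle_{\mathcal F_h}-\langle\varrho_1[\kappa\nabla_hu_h],[\kappa\nabla_hv_h]\rangle_{\mathcal F_h^i},$$ $$\langle\hat\sigma(\mathbf u_h),[\![\mathbf v_h]\!]\rangle_{\partial\mathcal T_h}=-\langle\{\kappa\nabla_hu_h\}^*_{\omega^\tau},[v_h]\rangle_{\mathcal F_h}+\langle\varrho_0[u_h],[v_h]\rangle_{\mathcal F_h}.$$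
   Context: Setting. Let $\Omega\subset\mathbb R^d$, $d\in\{2,3\}$, be a bounded polyhedral Lipschitz domain. Let $\kappa:\Omega\to\mathbb R^{d\times d}$ be symmetric with $\kappa_{\min}|\xi|^2\le\xi^\top\kappa(x)\xi\le\kappa_{\max}|\xi|^2$ for all $\xi\in\mathbb R^d$ and a.e. $x$, where $0<\kappa_{\min}\le\kappa_{\max}<\infty$. Let $\mathcal T_h$ be a conforming affine simplicial mesh of $\Omega$ from a shape-regular family, with $h_E=\operatorname{diam}E$, $h=\max_Eh_E\le1$, and assume $\kappa$ is constant on each element, $\kappa_E:=\kappa|_E$. $\mathcal F_h=\mathcal F_h^i\cup\mathcal F_h^b$ is the set of faces (edges if $d=2$), split into interior and boundary faces; $\mathcal F_E$ is the set of faces of $E$, $n_{E,F}$ the unit outward normal to $F\in\mathcal F_E$, and $\eta_0:=\max_E\#\mathcal F_E$. For an interior face $F=\partial E_1\cap\partial E_2$, a subscript $i\in\{1,2\}$ denotes the trace from $E_i$ and $n_i:=n_{E_i,F}$. $\nabla_h$ is the elementwise gradient; $(\cdot,\cdot)_{\mathcal T_h}:=\sum_E(\cdot,\cdot)_{L^2(E)}$, $\langle\cdot,\cdot\rangle_{\partial\mathcal T_h}:=\sum_E\sum_{F\in\mathcal F_E}\langle\cdot,\cdot\rangle_{L^2(F)}$ (traces from $E$), $\langle\cdot,\cdot\rangle_{\mathcal F}:=\sum_{F\in\mathcal F}\langle\cdot,\cdot\rangle_{L^2(F)}$ for a set $\mathcal F$ of faces. Fix $k\ge1$: $V_h:=\{v\in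 L^2(\Omega):v|_E\in\mathbb P_k(E)\ \forall E\}$, $\hat V_h:=\{\hat v\in L^2(\bigcup_{F\in\mathcal F_h}F):\hat v|_F\in\mathbb P_k(F)\ \forall F,\ \hat v|_F=0\ \forall F\in\mathcal F_h^b\}$, $\mathbf V_h:=V_h\times\hat V_h$ ($\mathbb P_k$ = polynomials of total degree $\le k$). Trace operators. For an interior face and a pair of weights $(\omega_1,\omega_2)$ with $\omega_1+\omega_2=1$ (boundary faces: $(1,0)$): $[\varphi]:=\varphi_1n_1+\varphi_2n_2$, $\{\varphi\}_\omega:=\omega_1\varphi_1+\omega_2\varphi_2$, $\{\varphi\}^*_\omega:=\omega_2\varphi_1+\omega_1\varphi_2$; on a boundary face $F\subset\partial E$: $[\varphi]:=\varphi|_En_{E,F}$, $\{\varphi\}_\omega=\{\varphi\}^*_\omega:=\varphi|_E$. Means of vector fields are componentwise; for a vector field $\mathbf b$, $[\mathbf b]:=\mathbf b_1\cdot n_1+\mathbf b_2\cdot n_2$ (scalar) on interior faces. HDG jump: $[\![(\varphi,\hat\varphi)]\!]|_{E,F}:=(\varphi|_E-\hat\varphi)n_{E,F}$ for $F\in\mathcal F_E$. Penalty and coefficients. Let $C_T>0$ be such that $\|w\|_{L^2(F)}^2\le C_T^2h_E^{-1}\|w\|_{L^2(E)}^2$ for all $E$, $F\in\mathcal F_E$, $w\in\mathbb P_k(E)$. Fix $\alpha_0>0$ and set $\tau|_{E,F}:=\alpha_0C_T^2\kappa_{E,F}h_E^{-1}$ with $\kappa_{E,F}:=n_{E,F}^\top\kappa_En_{E,F}$.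 On an interior face with $\tau_i:=\tau|_{E_i,F}$: $\omega^\tau_i:=\tau_i/(\tau_1+\tau_2)$, $\varrho_0:=\tau_1\tau_2/(\tau_1+\tau_2)$, $\varrho_1:=1/(\tau_1+\tau_2)$; on a boundary face $F\subset\partial E$: $\omega^\tau:=(1,0)$, $\varrho_0:=\tau|_{E,F}$. H-IP method. For $\epsilon\in\{-1,0,1\}$, $\sigma(v):=-\kappa\nabla_hv$, and for $\mathbf u=(u,\hat u)\in\mathbf V_h$, $\hat\sigma(\mathbf u):=\sigma(u)+\tau[\![\mathbf u]\!]$ on $\partial\mathcal T_h$ (double-valued). $\mathbf a_h^{(\epsilon)}(\mathbf u,\mathbf v):=(\kappa\nabla_hu,\nabla_hv)_{\mathcal T_h}+\langle\hat\sigma(\mathbf u),[\![\mathbf v]\!]\rangle_{\partial\mathcal T_h}+\epsilon\langle\sigma(v),[\![\mathbf u]\!]\rangle_{\partial\mathcal T_h}$ for $\mathbf u=(u,\hat u),\mathbf v=(v,\hat v)\in\mathbf V_h$. The H-IP problem: find $\mathbf u_h\in\mathbf V_h$ with $\mathbf a_h^{(\epsilon)}(\mathbf u_h,\mathbf v_h)=(f,v_h)_{\mathcal T_h}$ for all $\mathbf v_h=(v_h,\hat v_h)\in\mathbf V_h$. *)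

theory Defs
  imports "HOL-Analysis.Analysis"
begin

text \<open>An element is represented by its vertex set (a set of
  d+1 affinely independent points of real^'d); the element itself is its convex hull.\<close>

definition faces :: "(real^'d) set \<Rightarrow> (real^'d) set set" where
  "faces E = {E - {p} | p. p \<in> E}"

definition Fh :: "(real^'d) set set \<Rightarrow> (real^'d) set set" where
  "Fh T = (\<Union>E\<in>T. faces E)"

definition elems :: "(real^'d) set set \<Rightarrow> (real^'d) set \<Rightarrow> (real^'d) set set" where
  "elems T F = {E \<in> T. F \<in> faces E}"

definition Fi :: "(real^'d) set set \<Rightarrow> (real^'d) set set" where
  "Fi T = {F \<in> Fh T. card (elems T F) = 2}"

definition Fb :: "(real^'d) set set \<Rightarrow> (real^'d) set set" where
  "Fb T = {F \<in> Fh T. card (elems T F) = 1}"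

definition nrm :: "(real^'d) set \<Rightarrow> (real^'d) set \<Rightarrow> real^'d" where
  "nrm E F = (THE n. norm n = 1 \<and> (\<forall>p\<in>F. \<forall>q\<in>F. n \<bullet> (p - q) = 0)
                    \<and> (\<forall>p\<in>F. \<forall>q\<in>E - F. n \<bullet> (q - p) < 0))"

text \<open>A (sign-free) unit normal of a face, used only to define the surface integral.\<close>
definition fnrm :: "(real^'d) set \<Rightarrow> real^'d" where
  "fnrm F = (SOME n. norm n = 1 \<and> (\<forall>p\<in>F. \<forall>q\<in>F. n \<bullet> (p - q) = 0))"

text \<open>Surface integral over the flat face conv F: the integral of g composed with the
  orthogonal projection onto the face hyperplane over the unit-height prism
  conv F + [0,1] n equals (Fubini in orthonormal coordinates) the surface integral of g over conv F.\<close>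
definition face_int :: "(real^'d) set \<Rightarrow> (real^'d \<Rightarrow> real) \<Rightarrow> real" where
  "face_int F g =
     (let n = fnrm F; p0 = (SOME p. p \<in> F) in
      integral {y + t *\<^sub>R n | y t. y \<in> convex hull F \<and> t \<in> {0..1}}
               (\<lambda>x. g (x - ((x - p0) \<bullet> n) *\<^sub>R n)))"

definition polyk :: "nat \<Rightarrow> (real^'d \<Rightarrow> real) \<Rightarrow> bool" where
  "polyk k p \<longleftrightarrow> (\<exists>c :: ('d \<Rightarrow> nat) \<Rightarrow> real.
      p = (\<lambda>x. \<Sum>\<alpha>\<in>{\<alpha>. sum \<alpha> UNIV \<le> k}. c \<alpha> * (\<Prod>i\<in>UNIV. (x $ i) ^ \<alpha> i)))"

definition Vh :: "nat \<Rightarrow> (real^'d) set set \<Rightarrow> ((real^'d) set \<Rightarrow> real^'d \<Rightarrow> real) \<Rightarrow> bool" where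
  "Vh k T v \<longleftrightarrow> (\<forall>E\<in>T. polyk k (v E))"

definition Vhat :: "nat \<Rightarrow> (real^'d) set set \<Rightarrow> ((real^'d) set \<Rightarrow> real^'d \<Rightarrow> real) \<Rightarrow> bool" where
  "Vhat k T vh \<longleftrightarrow> (\<forall>F\<in>Fh T. (\<exists>p. polyk k p \<and> (\<forall>x\<in>convex hull F. vh F x = p x))
                        \<and> (F \<in> Fb T \<longrightarrow> (\<forall>x\<in>convex hull F. vh F x = 0)))"

definition grad :: "(real^'d \<Rightarrow> real) \<Rightarrow> real^'d \<Rightarrow> real^'d" where
  "grad g x = (\<chi> i. frechet_derivative g (at x) (axis i 1))"

definition centroid :: "(real^'d) set \<Rightarrow> real^'d" where
  "centroid E = (1 / real (card E)) *\<^sub>R (\<Sum>p\<in>E. p)"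

text \<open>kappa_E (kappa is assumed constant on the interior of each element).\<close>
definition kE :: "(real^'d \<Rightarrow> real^'d^'d) \<Rightarrow> (real^'d) set \<Rightarrow> real^'d^'d" where
  "kE kappa E = kappa (centroid E)"

definition hE :: "(real^'d) set \<Rightarrow> real" where
  "hE E = diameter (convex hull E)"

definition tauf :: "real \<Rightarrow> real \<Rightarrow> (real^'d \<Rightarrow> real^'d^'d) \<Rightarrow> (real^'d) set \<Rightarrow> (real^'d) set \<Rightarrow> real" where
  "tauf \<alpha>0 CT kappa E F = \<alpha>0 * CT^2 * (nrm E F \<bullet> (kE kappa E *v nrm E F)) / hE E"

definition kgrad :: "(real^'d \<Rightarrow> real^'d^'d) \<Rightarrow> ((real^'d) set \<Rightarrow> real^'d \<Rightarrow> real) \<Rightarrow> (real^'d) set \<Rightarrow> real^'d \<Rightarrow> real^'d" where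
  "kgrad kappa u E x = kE kappa E *v grad (u E) x"

definition jumpS :: "(real^'d) set set \<Rightarrow> (real^'d) set \<Rightarrow> ((real^'d) set \<Rightarrow> real^'d \<Rightarrow> real) \<Rightarrow> real^'d \<Rightarrow> real^'d" where
  "jumpS T F \<phi> x = (\<Sum>E\<in>elems T F. \<phi> E x *\<^sub>R nrm E F)"

definition jumpV :: "(real^'d) set set \<Rightarrow> (real^'d) set \<Rightarrow> ((real^'d) set \<Rightarrow> real^'d \<Rightarrow> real^'d) \<Rightarrow> real^'d \<Rightarrow> real" where
  "jumpV T F b x = (\<Sum>E\<in>elems T F. b E x \<bullet> nrm E F)"

text \<open>Weighted mean {phi}^*_{omega^tau}: on interior faces omega_2 phi_1 + omega_1 phi_2
  = sum_i (1 - omega_i) phi_i, omega_i = tau_i/(tau_1+tau_2); on boundary faces the trace.\<close>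
definition mean_star :: "(real^'d) set set \<Rightarrow> ((real^'d) set \<Rightarrow> (real^'d) set \<Rightarrow> real) \<Rightarrow> (real^'d) set
      \<Rightarrow> ((real^'d) set \<Rightarrow> real^'d \<Rightarrow> 'b::real_vector) \<Rightarrow> real^'d \<Rightarrow> 'b" where
  "mean_star T tau F \<phi> x =
     (if F \<in> Fb T then (\<Sum>E\<in>elems T F. \<phi> E x)
      else (\<Sum>E\<in>elems T F. (1 - tau E F / (\<Sum>E'\<in>elems T F. tau E' F)) *\<^sub>R \<phi> E x))"

definition rho0 :: "(real^'d) set set \<Rightarrow> ((real^'d) set \<Rightarrow> (real^'d) set \<Rightarrow> real) \<Rightarrow> (real^'d) set \<Rightarrow> real" where
  "rho0 T tau F =
     (if F \<in> Fb T then (\<Sum>E\<in>elems T F. tau E F)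
      else (\<Prod>E\<in>elems T F. tau E F) / (\<Sum>E\<in>elems T F. tau E F))"

definition rho1 :: "(real^'d) set set \<Rightarrow> ((real^'d) set \<Rightarrow> (real^'d) set \<Rightarrow> real) \<Rightarrow> (real^'d) set \<Rightarrow> real" where
  "rho1 T tau F = 1 / (\<Sum>E\<in>elems T F. tau E F)"

definition hjump :: "((real^'d) set \<Rightarrow> real^'d \<Rightarrow> real) \<Rightarrow> ((real^'d) set \<Rightarrow> real^'d \<Rightarrow> real)
      \<Rightarrow> (real^'d) set \<Rightarrow> (real^'d) set \<Rightarrow> real^'d \<Rightarrow> real^'d" where
  "hjump u uh E F x = (u E x - uh F x) *\<^sub>R nrm E F"

definition sighat :: "(real^'d \<Rightarrow> real^'d^'d) \<Rightarrow> ((real^'d) set \<Rightarrow> (real^'d) set \<Rightarrow> real)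
      \<Rightarrow> ((real^'d) set \<Rightarrow> real^'d \<Rightarrow> real) \<Rightarrow> ((real^'d) set \<Rightarrow> real^'d \<Rightarrow> real)
      \<Rightarrow> (real^'d) set \<Rightarrow> (real^'d) set \<Rightarrow> real^'d \<Rightarrow> real^'d" where
  "sighat kappa tau u uh E F x = - kgrad kappa u E x + tau E F *\<^sub>R hjump u uh E F x"

definition bdry_pair :: "(real^'d) set set \<Rightarrow> ((real^'d) set \<Rightarrow> (real^'d) set \<Rightarrow> real^'d \<Rightarrow> real) \<Rightarrow> real" where
  "bdry_pair T g = (\<Sum>E\<in>T. \<Sum>F\<in>faces E. face_int F (g E F))"

definition aH :: "(real^'d) set set \<Rightarrow> (real^'d \<Rightarrow> real^'d^'d) \<Rightarrow> ((real^'d) set \<Rightarrow> (real^'d) set \<Rightarrow> real)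
      \<Rightarrow> real \<Rightarrow> ((real^'d) set \<Rightarrow> real^'d \<Rightarrow> real) \<Rightarrow> ((real^'d) set \<Rightarrow> real^'d \<Rightarrow> real)
      \<Rightarrow> ((real^'d) set \<Rightarrow> real^'d \<Rightarrow> real) \<Rightarrow> ((real^'d) set \<Rightarrow> real^'d \<Rightarrow> real) \<Rightarrow> real" where
  "aH T kappa tau eps u uh v vh =
     (\<Sum>E\<in>T. integral (convex hull E) (\<lambda>x. kgrad kappa u E x \<bullet> grad (v E) x))
     + bdry_pair T (\<lambda>E F x. sighat kappa tau u uh E F x \<bullet> hjump v vh E F x)
     + eps * bdry_pair T (\<lambda>E F x. (- kgrad kappa v E x) \<bullet> hjump u uh E F x)"

end

theory Submission imports Defs begin

definition mnm :: "('d \<Rightarrow> nat) \<Rightarrow> real^'d \<Rightarrow> real" where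
  "mnm \<alpha> x = (\<Prod>i\<in>UNIV. (x $ i) ^ \<alpha> i)"

lemma finite_idx: "finite {\<alpha>::'d::finite\<Rightarrow>nat. sum \<alpha> UNIV \<le> k}"
proof -
  have "{\<alpha>::'d\<Rightarrow>nat. sum \<alpha> UNIV \<le> k} \<subseteq> Pi\<^sub>E UNIV (\<lambda>_. {..k})"
  proof
    fix \<alpha> :: "'d \<Rightarrow> nat" assume "\<alpha> \<in> {\<alpha>. sum \<alpha> UNIV \<le> k}"
    then have "\<alpha> i \<le> k" for i using member_le_sum[of i UNIV \<alpha>] by auto
    then show "\<alpha> \<in> Pi\<^sub>E UNIV (\<lambda>_. {..k})" by (auto simp: PiE_UNIV_domain)
  qed
  moreover have "finite (Pi\<^sub>E (UNIV::'d set) (\<lambda>_. {..k}))" by (rule finite_PiE) auto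
  ultimately show ?thesis by (rule finite_subset)
qed

lemma polyk_alt: "polyk k p \<longleftrightarrow> (\<exists>c. p = (\<lambda>x. \<Sum>\<alpha>\<in>{\<alpha>. sum \<alpha> UNIV \<le> k}. c \<alpha> * mnm \<alpha> x))"
  unfolding polyk_def mnm_def by simp

lemma polyk_zero: "polyk k (\<lambda>x. 0)"
  unfolding polyk_alt by (rule exI[of _ "\<lambda>_. 0"]) simp

lemma polyk_add: "polyk k p \<Longrightarrow> polyk k q \<Longrightarrow> polyk k (\<lambda>x. p x + q x)"
proof -
  assume "polyk k p" "polyk k q"
  then obtain c d where "p = (\<lambda>x. \<Sum>\<alpha>\<in>{\<alpha>. sum \<alpha> UNIV \<le> k}. c \<alpha> * mnm \<alpha> x)"
     "q = (\<lambda>x. \<Sum>\<alpha>\<in>{\<alpha>. sum \<alpha> UNIV \<le> k}. d \<alpha> * mnm \<alpha> x)" unfolding polyk_alt by blast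
  then have "(\<lambda>x. p x + q x) = (\<lambda>x. \<Sum>\<alpha>\<in>{\<alpha>. sum \<alpha> UNIV \<le> k}. (c \<alpha> + d \<alpha>) * mnm \<alpha> x)"
    by (simp add: sum.distrib algebra_simps)
  then show ?thesis unfolding polyk_alt by (rule exI[where x="\<lambda>\<alpha>. c \<alpha> + d \<alpha>"])
qed

lemma polyk_scale: "polyk k p \<Longrightarrow> polyk k (\<lambda>x. c * p x)"
proof -
  assume "polyk k p"
  then obtain d where "p = (\<lambda>x. \<Sum>\<alpha>\<in>{\<alpha>. sum \<alpha> UNIV \<le> k}. d \<alpha> * mnm \<alpha> x)"
     unfolding polyk_alt by blast
  then have "(\<lambda>x. c * p x) = (\<lambda>x. \<Sum>\<alpha>\<in>{\<alpha>. sum \<alpha> UNIV \<le> k}. (c * d \<alpha>) * mnm \<alpha> x)"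
    by (simp add: sum_distrib_left algebra_simps)
  then show ?thesis unfolding polyk_alt by (rule exI[where x="\<lambda>\<alpha>. c * d \<alpha>"])
qed

lemma polyk_neg: "polyk k p \<Longrightarrow> polyk k (\<lambda>x. - p x)"
  using polyk_scale[of k p "-1"] by simp

lemma polyk_sum: "finite A \<Longrightarrow> (\<And>a. a \<in> A \<Longrightarrow> polyk k (p a)) \<Longrightarrow> polyk k (\<lambda>x. \<Sum>a\<in>A. p a x)"
  by (induction A rule: finite_induct) (auto intro: polyk_zero polyk_add)

lemma polyk_mono: assumes "sum \<beta> UNIV \<le> k" shows "polyk k (\<lambda>x. c * mnm \<beta> x)"
proof -
  have "(\<lambda>x. c * mnm \<beta> x) = (\<lambda>x. \<Sum>\<alpha>\<in>{\<alpha>. sum \<alpha> UNIV \<le> k}. (if \<alpha> = \<beta> then c else 0) * mnm \<alpha> x)"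
  proof
    fix x
    have "(\<Sum>\<alpha>\<in>{\<alpha>. sum \<alpha> UNIV \<le> k}. (if \<alpha> = \<beta> then c else 0) * mnm \<alpha> x)
        = (\<Sum>\<alpha>\<in>{\<alpha>. sum \<alpha> UNIV \<le> k}. if \<alpha> = \<beta> then c * mnm \<alpha> x else 0)"
      by (rule sum.cong) auto
    also have "\<dots> = c * mnm \<beta> x" by (subst sum.delta[OF finite_idx]) (use assms in simp)
    finally show "c * mnm \<beta> x = (\<Sum>\<alpha>\<in>{\<alpha>. sum \<alpha> UNIV \<le> k}. (if \<alpha> = \<beta> then c else 0) * mnm \<alpha> x)" by simp
  qed
  then show ?thesis unfolding polyk_alt by (rule exI[where x="\<lambda>\<alpha>. if \<alpha> = \<beta> then c else 0"])
qed

lemma polyk_const: "polyk k (\<lambda>x. c)"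
  using polyk_mono[of "\<lambda>_. 0" k c] by (simp add: mnm_def)

lemma cont_mono: "continuous_on S (mnm \<alpha>)"
  unfolding mnm_def by (intro continuous_intros)

lemma polyk_cont: "polyk k p \<Longrightarrow> continuous_on S p"
  unfolding polyk_alt mnm_def by (auto intro!: continuous_intros)

lemma mnm_deriv: "(mnm \<alpha> has_derivative
   (\<lambda>h. \<Sum>i\<in>UNIV. (of_nat (\<alpha> i) * x $ i ^ (\<alpha> i - 1) * h $ i) * (\<Prod>j\<in>UNIV - {i}. x $ j ^ \<alpha> j))) (at x)"
  unfolding mnm_def
  by (rule has_derivative_prod) (auto intro!: derivative_eq_intros bounded_linear_imp_has_derivative bounded_linear_vec_nth)

lemma mnm_partial:
  "(\<Sum>i\<in>UNIV. (of_nat (\<alpha> i) * x $ i ^ (\<alpha> i - 1) * axis j 1 $ i) * (\<Prod>j\<in>UNIV - {i}. x $ j ^ \<alpha> j))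
   = (if \<alpha> j = 0 then 0 else of_nat (\<alpha> j) * mnm (\<alpha>(j := \<alpha> j - 1)) x)"
proof -
  have "(\<Sum>i\<in>UNIV. (of_nat (\<alpha> i) * x $ i ^ (\<alpha> i - 1) * axis j 1 $ i) * (\<Prod>j\<in>UNIV - {i}. x $ j ^ \<alpha> j))
     = (\<Sum>i\<in>UNIV. if i = j then (of_nat (\<alpha> i) * x $ i ^ (\<alpha> i - 1)) * (\<Prod>j\<in>UNIV - {i}. x $ j ^ \<alpha> j) else 0)"
    by (rule sum.cong) (auto simp: axis_def)
  also have "\<dots> = (of_nat (\<alpha> j) * x $ j ^ (\<alpha> j - 1)) * (\<Prod>i\<in>UNIV - {j}. x $ i ^ \<alpha> i)"
    by simp
  also have "\<dots> = (if \<alpha> j = 0 then 0 else of_nat (\<alpha> j) * mnm (\<alpha>(j := \<alpha> j - 1)) x)"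
  proof -
    have "mnm (\<alpha>(j := \<alpha> j - 1)) x = x $ j ^ (\<alpha> j - 1) * (\<Prod>i\<in>UNIV - {j}. x $ i ^ (\<alpha>(j := \<alpha> j - 1)) i)"
      unfolding mnm_def by (subst prod.remove[of _ j]) auto
    also have "(\<Prod>i\<in>UNIV - {j}. x $ i ^ (\<alpha>(j := \<alpha> j - 1)) i) = (\<Prod>i\<in>UNIV - {j}. x $ i ^ \<alpha> i)"
      by (rule prod.cong) auto
    finally have m: "mnm (\<alpha>(j := \<alpha> j - 1)) x = x $ j ^ (\<alpha> j - 1) * (\<Prod>i\<in>UNIV - {j}. x $ i ^ \<alpha> i)" .
    show ?thesis by (simp only: m) simp
  qed
  finally show ?thesis .
qed

lemma polyk_hasderiv:
  assumes "p = (\<lambda>x. \<Sum>\<alpha>\<in>{\<alpha>. sum \<alpha> UNIV \<le> k}. c \<alpha> * mnm \<alpha> x)"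
  shows "(p has_derivative (\<lambda>h. \<Sum>\<alpha>\<in>{\<alpha>. sum \<alpha> UNIV \<le> k}. c \<alpha> *
      (\<Sum>i\<in>UNIV. (of_nat (\<alpha> i) * x $ i ^ (\<alpha> i - 1) * h $ i) * (\<Prod>j\<in>UNIV - {i}. x $ j ^ \<alpha> j)))) (at x)"
  unfolding assms
  by (intro has_derivative_sum has_derivative_mult_right mnm_deriv)

lemma polyk_grad:
  assumes "polyk k p" shows "polyk k (\<lambda>x. grad p x $ j)"
proof -
  obtain c where p: "p = (\<lambda>x. \<Sum>\<alpha>\<in>{\<alpha>. sum \<alpha> UNIV \<le> k}. c \<alpha> * mnm \<alpha> x)"
    using assms unfolding polyk_alt by blast
  have "grad p x $ j = (\<Sum>\<alpha>\<in>{\<alpha>. sum \<alpha> UNIV \<le> k}. c \<alpha> *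
          (if \<alpha> j = 0 then 0 else of_nat (\<alpha> j) * mnm (\<alpha>(j := \<alpha> j - 1)) x))" for x
  proof -
    have fd: "frechet_derivative p (at x) = (\<lambda>h. \<Sum>\<alpha>\<in>{\<alpha>. sum \<alpha> UNIV \<le> k}. c \<alpha> *
      (\<Sum>i\<in>UNIV. (of_nat (\<alpha> i) * x $ i ^ (\<alpha> i - 1) * h $ i) * (\<Prod>j\<in>UNIV - {i}. x $ j ^ \<alpha> j)))"
      by (rule frechet_derivative_at[OF polyk_hasderiv[OF p], symmetric])
    show ?thesis by (simp only: grad_def vec_lambda_beta fd mnm_partial)
  qed
  then have e: "(\<lambda>x. grad p x $ j) = (\<lambda>x. \<Sum>\<alpha>\<in>{\<alpha>. sum \<alpha> UNIV \<le> k}. c \<alpha> *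
          (if \<alpha> j = 0 then 0 else of_nat (\<alpha> j) * mnm (\<alpha>(j := \<alpha> j - 1)) x))" by blast
  show ?thesis unfolding e
  proof (rule polyk_sum[OF finite_idx])
    fix \<alpha> :: "'a \<Rightarrow> nat" assume a: "\<alpha> \<in> {\<alpha>. sum \<alpha> UNIV \<le> k}"
    show "polyk k (\<lambda>x. c \<alpha> * (if \<alpha> j = 0 then 0 else of_nat (\<alpha> j) * mnm (\<alpha>(j := \<alpha> j - 1)) x))"
    proof (cases "\<alpha> j = 0")
      case True then show ?thesis by (simp add: polyk_zero)
    next
      case False
      have "sum (\<alpha>(j := \<alpha> j - 1)) UNIV \<le> sum \<alpha> UNIV" by (rule sum_mono) auto
      with a have "sum (\<alpha>(j := \<alpha> j - 1)) UNIV \<le> k" by simp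
      from polyk_mono[OF this, of "c \<alpha> * of_nat (\<alpha> j)"] False show ?thesis
        by (simp add: mult.assoc)
    qed
  qed
qed

lemma DIM_vec: "DIM(real^'d) = CARD('d)"
  by simp

lemma face_basic:
  fixes E :: "(real^'d) set"
  assumes "card E = CARD('d) + 1" "\<not> affine_dependent E" "F \<in> faces E"
  obtains q where "q \<in> E" "F = E - {q}" "finite E" "finite F" "card F = CARD('d)"
    "\<not> affine_dependent F" "F \<noteq> {}" "q \<notin> F"
proof -
  from assms(3) obtain q where q: "q \<in> E" "F = E - {q}" unfolding faces_def by blast
  have fE: "finite E" using assms(1) by (intro card_ge_0_finite) simp
  have cF: "card F = CARD('d)" using q fE assms(1) by simp
  have ne: "F \<noteq> {}" using cF by auto
  have ad: "\<not> affine_dependent F" using q assms(2) affine_independent_subset by blast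
  have fF: "finite F" using q fE by simp
  have qF: "q \<notin> F" using q by simp
  show ?thesis by (rule that[OF q fE fF cF ad ne qF])
qed

lemma fnrm_good:
  fixes F :: "(real^'d) set"
  assumes "finite F" "card F = CARD('d)" "F \<noteq> {}"
  shows "norm (fnrm F) = 1 \<and> (\<forall>p\<in>F. \<forall>q\<in>F. fnrm F \<bullet> (p - q) = 0)"
proof -
  obtain p0 where p0: "p0 \<in> F" using assms by blast
  define S where "S = (\<lambda>p. p - p0) ` (F - {p0})"
  have "dim S \<le> card S" by (rule dim_le_card[OF span_superset]) (simp add: S_def assms)
  also have "\<dots> \<le> card (F - {p0})" unfolding S_def by (rule card_image_le) (simp add: assms)
  also have "\<dots> < CARD('d)" using assms p0 by (simp add: card_Diff_singleton)
  finally have "dim S < DIM(real^'d)" by simp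
  then obtain x :: "real^'d" where x: "x \<noteq> 0" "\<And>y. y \<in> span S \<Longrightarrow> orthogonal x y"
    using orthogonal_to_subspace_exists[OF \<open>dim S < DIM(real^'d)\<close>] by blast
  define n where "n = x /\<^sub>R norm x"
  have inS: "p - p0 \<in> span S" if "p \<in> F" for p
  proof (cases "p = p0")
    case True then show ?thesis by (simp add: span_zero)
  next
    case False then show ?thesis using that by (intro span_base) (auto simp: S_def)
  qed
  have "norm n = 1 \<and> (\<forall>p\<in>F. \<forall>q\<in>F. n \<bullet> (p - q) = 0)"
  proof (intro conjI ballI)
    show "norm n = 1" using x by (simp add: n_def)
    fix p q assume "p \<in> F" "q \<in> F"
    then have "x \<bullet> (p - p0) = 0" "x \<bullet> (q - p0) = 0" using x(2) inS by (auto simp: orthogonal_def)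
    moreover have "p - q = (p - p0) - (q - p0)" by simp
    ultimately have "x \<bullet> (p - q) = 0" by (simp only: inner_diff_right)
    then show "n \<bullet> (p - q) = 0" by (simp add: n_def)
  qed
  then show ?thesis unfolding fnrm_def by (rule someI)
qed

lemma face_hyper:
  fixes F :: "(real^'d) set"
  assumes "finite F" "card F = CARD('d)" "\<not> affine_dependent F" "p0 \<in> F"
    "norm n = 1" "\<forall>p\<in>F. \<forall>q\<in>F. n \<bullet> (p - q) = 0"
  shows "affine hull F = {x. n \<bullet> (x - p0) = 0}"
proof -
  have H: "{x. n \<bullet> (x - p0) = 0} = {x. n \<bullet> x = n \<bullet> p0}" by (auto simp: inner_diff_right)
  have n0: "n \<noteq> 0" using assms(5) by auto
  have sub: "affine hull F \<subseteq> {x. n \<bullet> x = n \<bullet> p0}"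
  proof (rule hull_minimal)
    show "F \<subseteq> {x. n \<bullet> x = n \<bullet> p0}"
    proof
      fix p assume "p \<in> F"
      then have "n \<bullet> (p - p0) = 0" using assms(4,6) by blast
      then show "p \<in> {x. n \<bullet> x = n \<bullet> p0}" by (simp add: inner_diff_right)
    qed
  qed (rule affine_hyperplane)
  have "aff_dim (affine hull F) = int (CARD('d)) - 1"
    using aff_dim_affine_independent[OF assms(3)] assms(2) by simp
  also have "\<dots> = aff_dim {x. n \<bullet> x = n \<bullet> p0}" using aff_dim_hyperplane[OF n0] by simp
  finally have dims: "aff_dim (affine hull F) = aff_dim {x. n \<bullet> x = n \<bullet> p0}" .
  have ne: "affine hull F \<noteq> {}" using hull_inc[OF assms(4), of affine] by blast
  have "affine hull F = {x. n \<bullet> x = n \<bullet> p0}"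
    by (rule affine_dim_equal[OF affine_affine_hull affine_hyperplane ne sub dims])
  then show ?thesis using H by simp
qed

lemma unit_normal_pm:
  fixes F :: "(real^'d) set"
  assumes "finite F" "card F = CARD('d)" "\<not> affine_dependent F" "p0 \<in> F"
    "norm n0 = 1" "\<forall>p\<in>F. \<forall>q\<in>F. n0 \<bullet> (p - q) = 0"
    "norm n = 1" "\<forall>p\<in>F. \<forall>q\<in>F. n \<bullet> (p - q) = 0"
  shows "n = n0 \<or> n = - n0"
proof -
  define c where "c = n \<bullet> n0"
  define w where "w = n - c *\<^sub>R n0"
  have nn0: "n0 \<bullet> n0 = 1" using assms(5) by (simp add: norm_eq_1)
  have nn: "n \<bullet> n = 1" using assms(7) by (simp add: norm_eq_1)
  have "n0 \<bullet> w = 0" unfolding w_def c_def by (simp add: inner_diff_right nn0 inner_commute)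
  then have "p0 + w \<in> {x. n0 \<bullet> (x - p0) = 0}" by simp
  also have "\<dots> = affine hull F" using face_hyper[OF assms(1-6)] by simp
  also have "\<dots> = {x. n \<bullet> (x - p0) = 0}" using face_hyper[OF assms(1-4,7,8)] by simp
  finally have nw: "n \<bullet> w = 0" by simp
  then have c2: "c * c = 1" unfolding w_def c_def by (simp add: inner_diff_right nn)
  have "w \<bullet> w = 0" using nw \<open>n0 \<bullet> w = 0\<close> unfolding w_def
    by (simp add: inner_diff_left)
  then have "w = 0" by simp
  then have "n = c *\<^sub>R n0" unfolding w_def by simp
  moreover have "c = 1 \<or> c = -1" using c2
    by (metis mult_cancel_left2 mult_minus_left square_eq_1_iff)
  ultimately show ?thesis by auto
qed

lemma nrm_props:
  fixes E :: "(real^'d) set"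
  assumes E: "card E = CARD('d) + 1" "\<not> affine_dependent E" and q: "q \<in> E" and F: "F = E - {q}"
  shows "norm (nrm E F) = 1" "\<forall>p\<in>F. \<forall>p'\<in>F. nrm E F \<bullet> (p - p') = 0"
    "\<forall>p\<in>F. nrm E F \<bullet> (q - p) < 0" "nrm E F = fnrm F \<or> nrm E F = - fnrm F"
proof -
  have Ff: "F \<in> faces E" using q F unfolding faces_def by blast
  obtain q' where "q' \<in> E" "F = E - {q'}" "finite E" and fF: "finite F" and cF: "card F = CARD('d)"
    and aF: "\<not> affine_dependent F" and neF: "F \<noteq> {}" and "q' \<notin> F"
    by (rule face_basic[OF E Ff])
  define n0 where "n0 = fnrm F"
  have g: "norm n0 = 1" "\<forall>p\<in>F. \<forall>q\<in>F. n0 \<bullet> (p - q) = 0"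
    using fnrm_good[OF fF cF neF] unfolding n0_def by auto
  obtain p0 where p0: "p0 \<in> F" using neF by blast
  have nz: "n0 \<bullet> (q - p0) \<noteq> 0"
  proof
    assume "n0 \<bullet> (q - p0) = 0"
    then have "q \<in> affine hull F" using face_hyper[OF fF cF aF p0 g] by simp
    then have "affine_dependent E" unfolding affine_dependent_def using q F by blast
    then show False using E by simp
  qed
  define n1 where "n1 = (if n0 \<bullet> (q - p0) < 0 then n0 else - n0)"
  have EF: "E - F = {q}" using q F by auto
  have sgn: "n1 \<bullet> (q - p0) < 0" using nz unfolding n1_def by auto
  let ?P = "\<lambda>n. norm n = 1 \<and> (\<forall>p\<in>F. \<forall>q\<in>F. n \<bullet> (p - q) = 0) \<and> (\<forall>p\<in>F. \<forall>q\<in>E - F. n \<bullet> (q - p) < 0)"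
  have side: "m \<bullet> (q - p) = m \<bullet> (q - p0)" if "p \<in> F" "\<forall>p\<in>F. \<forall>q\<in>F. m \<bullet> (p - q) = 0" for m p
  proof -
    have "m \<bullet> (p - p0) = 0" using that p0 by blast
    moreover have "q - p = (q - p0) - (p - p0)" by simp
    ultimately show ?thesis by (simp only: inner_diff_right)
  qed
  have o1: "\<forall>p\<in>F. \<forall>q\<in>F. n1 \<bullet> (p - q) = 0" using g(2) unfolding n1_def by auto
  have P1: "?P n1"
  proof (intro conjI)
    show "norm n1 = 1" using g(1) unfolding n1_def by auto
    show "\<forall>p\<in>F. \<forall>q\<in>F. n1 \<bullet> (p - q) = 0" by (rule o1)
    show "\<forall>p\<in>F. \<forall>q\<in>E - F. n1 \<bullet> (q - p) < 0" unfolding EF using side[OF _ o1] sgn by auto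
  qed
  have uniq: "m = n1" if "?P m" for m
  proof -
    have "m = n0 \<or> m = - n0" using unit_normal_pm[OF fF cF aF p0 g, of m] that by blast
    moreover have "m \<bullet> (q - p0) < 0" using that p0 EF by blast
    ultimately show ?thesis using sgn unfolding n1_def by auto
  qed
  have "nrm E F = n1" unfolding nrm_def by (rule the_equality[where P="?P", OF P1 uniq])
  then show "norm (nrm E F) = 1" "\<forall>p\<in>F. \<forall>p'\<in>F. nrm E F \<bullet> (p - p') = 0"
    "\<forall>p\<in>F. nrm E F \<bullet> (q - p) < 0" "nrm E F = fnrm F \<or> nrm E F = - fnrm F"
    using P1 EF side[OF _ o1] sgn unfolding n0_def n1_def by auto
qed

lemma opposite_normals:
  fixes T :: "(real^'d) set set"
  assumes simplex: "\<forall>E\<in>T. card E = CARD('d) + 1 \<and> \<not> affine_dependent E"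
    and conforming: "\<forall>E1\<in>T. \<forall>E2\<in>T. convex hull E1 \<inter> convex hull E2 = convex hull (E1 \<inter> E2)"
    and E12: "E1 \<in> T" "E2 \<in> T" "E1 \<noteq> E2" and F12: "F \<in> faces E1" "F \<in> faces E2"
  shows "nrm E2 F = - nrm E1 F"
proof (rule ccontr)
  assume contra: "nrm E2 F \<noteq> - nrm E1 F"
  have S1: "card E1 = CARD('d) + 1" "\<not> affine_dependent E1" using simplex E12 by auto
  have S2: "card E2 = CARD('d) + 1" "\<not> affine_dependent E2" using simplex E12 by auto
  obtain q1 where q1: "q1 \<in> E1" "F = E1 - {q1}" and fF: "finite F" and cF: "card F = CARD('d)"
    and aF: "\<not> affine_dependent F" and neF: "F \<noteq> {}"
    by (rule face_basic[OF S1 F12(1)])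
  obtain q2 where q2: "q2 \<in> E2" "F = E2 - {q2}"
    by (rule face_basic[OF S2 F12(2)])
  define n where "n = nrm E1 F"
  have N1: "norm n = 1" "\<forall>p\<in>F. \<forall>p'\<in>F. n \<bullet> (p - p') = 0" "\<forall>p\<in>F. n \<bullet> (q1 - p) < 0"
    "n = fnrm F \<or> n = - fnrm F"
    using nrm_props[OF S1 q1] unfolding n_def by auto
  have N2: "\<forall>p\<in>F. nrm E2 F \<bullet> (q2 - p) < 0" "nrm E2 F = fnrm F \<or> nrm E2 F = - fnrm F"
    using nrm_props[OF S2 q2] by auto
  have "nrm E2 F = n" using N1(4) N2(2) contra unfolding n_def by auto
  then have N2': "\<forall>p\<in>F. n \<bullet> (q2 - p) < 0" using N2(1) by simp
  obtain p0 where p0: "p0 \<in> F" using neF by blast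
  define a1 where "a1 = - (n \<bullet> (q1 - p0))"
  define a2 where "a2 = - (n \<bullet> (q2 - p0))"
  have a1: "a1 > 0" using N1(3) p0 unfolding a1_def by auto
  have a2: "a2 > 0" using N2' p0 unfolding a2_def by auto
  have H: "affine hull F = {x. n \<bullet> (x - p0) = 0}" by (rule face_hyper[OF fF cF aF p0 N1(1,2)])
  have cFH: "convex hull F \<subseteq> {x. n \<bullet> (x - p0) = 0}"
    using convex_hull_subset_affine_hull[of F] H by simp
  have "convex hull F \<noteq> {}" using neF by simp
  then obtain y1 where "y1 \<in> rel_interior (convex hull F)"
    using rel_interior_eq_empty[OF convex_convex_hull] by blast
  then obtain e where y1: "y1 \<in> convex hull F" and e: "e > 0"
    and eb: "ball y1 e \<inter> affine hull F \<subseteq> convex hull F"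
    unfolding mem_rel_interior_ball by auto
  have y1H: "n \<bullet> (y1 - p0) = 0" using cFH y1 by auto
  define M where "M = norm (q1 - y1) + (a1 / a2) * norm (q2 - y1) + 1"
  have M: "M > 0" unfolding M_def using a1 a2 by (simp add: add_nonneg_pos)
  define t1 where "t1 = min (1/2) (min (a2 / (2 * a1)) (e / (4 * M)))"
  have t1: "t1 > 0" "t1 \<le> 1/2" "t1 \<le> a2 / (2 * a1)" "t1 \<le> e / (4 * M)"
    unfolding t1_def using a1 a2 e M by auto
  define t2 where "t2 = t1 * a1 / a2"
  have t2a: "t2 * a2 = t1 * a1" unfolding t2_def using a2 by simp
  have t2: "t2 > 0" "t2 \<le> 1/2"
  proof -
    show "t2 > 0" unfolding t2_def using t1 a1 a2 by simp
    have "t1 * a1 \<le> a2 / 2" using t1(3) a1 by (simp add: field_simps)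
    then show "t2 \<le> 1/2" unfolding t2_def using a2 by (simp add: field_simps)
  qed
  define z where "z = y1 + t1 *\<^sub>R (q1 - y1)"
  define y where "y = (1 / (1 - t2)) *\<^sub>R (z - t2 *\<^sub>R q2)"
  have zE1: "z \<in> convex hull E1"
  proof -
    have "y1 \<in> convex hull E1" using y1 hull_mono[of F E1] q1 by blast
    moreover have "q1 \<in> convex hull E1" using q1 by (simp add: hull_inc)
    moreover have "z = (1 - t1) *\<^sub>R y1 + t1 *\<^sub>R q1" unfolding z_def by (simp add: algebra_simps)
    ultimately show ?thesis using t1 convexD[OF convex_convex_hull, of y1 E1 q1 "1 - t1" t1] by simp
  qed
  have zn: "n \<bullet> (z - p0) = - t1 * a1"
  proof -
    have "z - p0 = (y1 - p0) + t1 *\<^sub>R ((q1 - p0) - (y1 - p0))" unfolding z_def by (simp add: algebra_simps)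
    then have "n \<bullet> (z - p0) = n \<bullet> (y1 - p0) + t1 * (n \<bullet> (q1 - p0) - n \<bullet> (y1 - p0))"
      by (simp only: inner_add_right inner_scaleR_right inner_diff_right)
    then show ?thesis using y1H unfolding a1_def by simp
  qed
  have ty: "(1 - t2) *\<^sub>R y = z - t2 *\<^sub>R q2" unfolding y_def using t2 by simp
  have yH: "n \<bullet> (y - p0) = 0"
  proof -
    have "(1 - t2) *\<^sub>R (y - p0) = (z - p0) - t2 *\<^sub>R (q2 - p0)"
      using ty by (simp add: algebra_simps)
    then have "(1 - t2) * (n \<bullet> (y - p0)) = n \<bullet> (z - p0) - t2 * (n \<bullet> (q2 - p0))"
      by (metis inner_diff_right inner_scaleR_right)
    also have "\<dots> = 0" using zn t2a unfolding a2_def by simp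
    finally show ?thesis using t2 by simp
  qed
  have yd: "norm (y - y1) < e"
  proof -
    have "(1 - t2) *\<^sub>R (y - y1) = t1 *\<^sub>R (q1 - y1) - t2 *\<^sub>R (q2 - y1)"
      using ty unfolding z_def by (simp add: algebra_simps)
    then have "norm ((1 - t2) *\<^sub>R (y - y1)) = norm (t1 *\<^sub>R (q1 - y1) - t2 *\<^sub>R (q2 - y1))"
      by simp
    then have "(1 - t2) * norm (y - y1) = norm (t1 *\<^sub>R (q1 - y1) - t2 *\<^sub>R (q2 - y1))"
      using t2 by (simp only: norm_scaleR)
    also have "\<dots> \<le> t1 * norm (q1 - y1) + t2 * norm (q2 - y1)"
      using t1 t2 by (metis (no_types, lifting) abs_of_pos norm_scaleR norm_triangle_ineq4)
    also have "\<dots> = t1 * (norm (q1 - y1) + (a1 / a2) * norm (q2 - y1))"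
      unfolding t2_def by (simp add: algebra_simps)
    also have "\<dots> \<le> t1 * M" unfolding M_def using t1 by (simp add: mult_left_mono)
    also have "\<dots> \<le> e / 4" using t1(4) M by (simp add: field_simps)
    finally have "(1 - t2) * norm (y - y1) \<le> e / 4" .
    moreover have "(1/2) * norm (y - y1) \<le> (1 - t2) * norm (y - y1)"
      using t2 by (intro mult_right_mono) auto
    ultimately show ?thesis using e by linarith
  qed
  have yF: "y \<in> convex hull F"
    using eb yd yH H by (auto simp: dist_norm norm_minus_commute)
  have zE2: "z \<in> convex hull E2"
  proof -
    have "y \<in> convex hull E2" using yF hull_mono[of F E2] q2 by blast
    moreover have "q2 \<in> convex hull E2" using q2 by (simp add: hull_inc)
    moreover have "z = (1 - t2) *\<^sub>R y + t2 *\<^sub>R q2" using ty by simp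
    ultimately show ?thesis using t2 convexD[OF convex_convex_hull, of y E2 q2 "1 - t2" t2] by simp
  qed
  have I: "E1 \<inter> E2 = F"
  proof
    show "F \<subseteq> E1 \<inter> E2" using q1 q2 by auto
    show "E1 \<inter> E2 \<subseteq> F"
    proof
      fix x assume x: "x \<in> E1 \<inter> E2"
      show "x \<in> F"
      proof (rule ccontr)
        assume "x \<notin> F"
        then have "x = q1" "x = q2" using x q1 q2 by auto
        then have "E1 = E2" using q1 q2 by auto
        then show False using E12 by simp
      qed
    qed
  qed
  have "z \<in> convex hull F" using zE1 zE2 conforming E12 I by blast
  then have "n \<bullet> (z - p0) = 0" using cFH by auto
  then show False using zn t1 a1 by simp
qed

definition goodF :: "(real^'d) set \<Rightarrow> bool" where
  "goodF (F :: (real^'d) set) \<longleftrightarrow> F \<noteq> {} \<and> finite F \<and> card F = CARD('d) \<and> \<not> affine_dependent F"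

definition prism :: "(real^'d) set \<Rightarrow> (real^'d) set" where
  "prism F = {y + t *\<^sub>R fnrm F | y t. y \<in> convex hull F \<and> t \<in> {0..1}}"

definition projF :: "(real^'d) set \<Rightarrow> real^'d \<Rightarrow> real^'d" where
  "projF F x = x - ((x - (SOME p. p \<in> F)) \<bullet> fnrm F) *\<^sub>R fnrm F"

lemma face_int_alt: "face_int F g = integral (prism F) (\<lambda>x. g (projF F x))"
  unfolding face_int_def prism_def projF_def Let_def by simp

lemma goodF_facts:
  fixes F :: "(real^'d) set" and g h :: "real^'d \<Rightarrow> real"
  assumes "goodF F"
  shows "norm (fnrm F) = 1" "\<forall>p\<in>F. \<forall>q\<in>F. fnrm F \<bullet> (p - q) = 0" "(SOME p. p \<in> F) \<in> F"
    "affine hull F = {x. fnrm F \<bullet> (x - (SOME p. p \<in> F)) = 0}"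
proof -
  have a: "F \<noteq> {}" "finite F" "card F = CARD('d)" "\<not> affine_dependent F" using assms by (auto simp: goodF_def)
  show n: "norm (fnrm F) = 1" "\<forall>p\<in>F. \<forall>q\<in>F. fnrm F \<bullet> (p - q) = 0" using fnrm_good[OF a(2,3,1)] by auto
  show p: "(SOME p. p \<in> F) \<in> F" using a(1) by (simp add: some_in_eq)
  show "affine hull F = {x. fnrm F \<bullet> (x - (SOME p. p \<in> F)) = 0}"
    by (rule face_hyper[OF a(2,3,4) p n])
qed

lemma convF_hyper:
  fixes F :: "(real^'d) set" and g h :: "real^'d \<Rightarrow> real"
  assumes "goodF F" "y \<in> convex hull F"
  shows "fnrm F \<bullet> (y - (SOME p. p \<in> F)) = 0"
  using convex_hull_subset_affine_hull[of F] goodF_facts(4)[OF assms(1)] assms(2) by blast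

lemma proj_prism:
  fixes F :: "(real^'d) set" and g h :: "real^'d \<Rightarrow> real"
  assumes "goodF F" "y \<in> convex hull F"
  shows "projF F (y + t *\<^sub>R fnrm F) = y"
proof -
  let ?n = "fnrm F" and ?p = "SOME p. p \<in> F"
  have nn: "?n \<bullet> ?n = 1" using goodF_facts(1)[OF assms(1)] by (simp add: norm_eq_1)
  have "(y + t *\<^sub>R ?n - ?p) \<bullet> ?n = (y - ?p) \<bullet> ?n + t * (?n \<bullet> ?n)"
    by (simp add: algebra_simps inner_add_left inner_diff_left)
  also have "\<dots> = t" using convF_hyper[OF assms] nn by (simp add: inner_commute)
  finally show ?thesis unfolding projF_def by simp
qed

lemma proj_in:
  fixes F :: "(real^'d) set" and g h :: "real^'d \<Rightarrow> real"
  assumes "goodF F" "x \<in> prism F"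
  shows "projF F x \<in> convex hull F"
  using assms(2) proj_prism[OF assms(1)] unfolding prism_def by auto

lemma compact_prism:
  fixes F :: "(real^'d) set" and g h :: "real^'d \<Rightarrow> real"
  assumes "goodF F" shows "compact (prism F)"
proof -
  have eq: "prism F = (\<lambda>z. fst z + snd z *\<^sub>R fnrm F) ` ((convex hull F) \<times> {0..1})"
  proof (intro equalityI subsetI)
    fix x assume "x \<in> prism F"
    then obtain y t where yt: "x = y + t *\<^sub>R fnrm F" "y \<in> convex hull F" "t \<in> {0..1::real}"
      unfolding prism_def by blast
    show "x \<in> (\<lambda>z. fst z + snd z *\<^sub>R fnrm F) ` ((convex hull F) \<times> {0..1})"
    proof (rule image_eqI)
      show "x = fst (y, t) + snd (y, t) *\<^sub>R fnrm F" using yt by simp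
      show "(y, t) \<in> (convex hull F) \<times> {0..1}" using yt by blast
    qed
  next
    fix x assume "x \<in> (\<lambda>z. fst z + snd z *\<^sub>R fnrm F) ` ((convex hull F) \<times> {0..1})"
    then obtain y t where "x = y + t *\<^sub>R fnrm F" "y \<in> convex hull F" "t \<in> {0..1}"
      by auto
    then show "x \<in> prism F" unfolding prism_def by blast
  qed
  have cmp: "compact ((convex hull F) \<times> {0..1::real})"
  proof (rule compact_Times[OF compact_convex_hull[OF finite_imp_compact] compact_Icc])
    show "finite F" using assms by (simp add: goodF_def)
  qed
  have cont: "continuous_on ((convex hull F) \<times> {0..1::real}) (\<lambda>z. fst z + snd z *\<^sub>R fnrm F)"
    by (intro continuous_intros)
  show ?thesis unfolding eq by (rule compact_continuous_image[OF cont cmp])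
qed

lemma integrable_compact:
  fixes f :: "'a::euclidean_space \<Rightarrow> real"
  assumes "compact S" "continuous_on S f"
  shows "f integrable_on S"
proof -
  have "integrable lborel (\<lambda>x. indicator S x *\<^sub>R f x)" by (rule borel_integrable_compact[OF assms])
  then have "set_integrable lborel S f" by (simp add: set_integrable_def)
  then show ?thesis by (rule set_borel_integral_eq_integral(1))
qed

lemma cont_projF: "continuous_on S (projF F)"
  unfolding projF_def by (intro continuous_intros)

lemma fi_cont:
  fixes F :: "(real^'d) set" and g h :: "real^'d \<Rightarrow> real"
  assumes "goodF F" "continuous_on (convex hull F) g"
  shows "continuous_on (prism F) (\<lambda>x. g (projF F x))"
  by (rule continuous_on_compose2[OF assms(2) cont_projF]) (use proj_in[OF assms(1)] in blast)

lemma fi_integrable: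
  fixes F :: "(real^'d) set" and g h :: "real^'d \<Rightarrow> real"
  assumes "goodF F" "continuous_on (convex hull F) g"
  shows "(\<lambda>x. g (projF F x)) integrable_on prism F"
  by (rule integrable_compact[OF compact_prism[OF assms(1)] fi_cont[OF assms]])

lemma face_int_add:
  fixes F :: "(real^'d) set" and g h :: "real^'d \<Rightarrow> real"
  assumes "goodF F" "continuous_on (convex hull F) g" "continuous_on (convex hull F) h"
  shows "face_int F (\<lambda>x. g x + h x) = face_int F g + face_int F h"
  unfolding face_int_alt by (rule integral_add[OF fi_integrable[OF assms(1,2)] fi_integrable[OF assms(1,3)]])

lemma face_int_neg: "face_int F (\<lambda>x. - g x) = - face_int F g"
  unfolding face_int_alt by simp

lemma face_int_zero: "face_int F (\<lambda>x. 0) = 0"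
  unfolding face_int_alt by simp

lemma face_int_sum:
  fixes F :: "(real^'d) set"
  assumes "goodF F" "finite A" "\<And>a. a \<in> A \<Longrightarrow> continuous_on (convex hull F) (g a)"
  shows "face_int F (\<lambda>x. \<Sum>a\<in>A. g a x) = (\<Sum>a\<in>A. face_int F (g a))"
  using assms(2,3)
proof (induction A rule: finite_induct)
  case empty then show ?case by (simp add: face_int_zero)
next
  case (insert a A)
  have "face_int F (\<lambda>x. \<Sum>a\<in>insert a A. g a x) = face_int F (\<lambda>x. g a x + (\<Sum>a\<in>A. g a x))"
    using insert(1,2) by simp
  also have "\<dots> = face_int F (g a) + face_int F (\<lambda>x. \<Sum>a\<in>A. g a x)"
  proof (rule face_int_add[OF assms(1)])
    show "continuous_on (convex hull F) (g a)" using insert.prems by simp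
    show "continuous_on (convex hull F) (\<lambda>x. \<Sum>a\<in>A. g a x)"
      by (rule continuous_on_sum) (use insert.prems in simp)
  qed
  finally show ?case using insert by simp
qed

lemma face_int_cong:
  fixes F :: "(real^'d) set" and g h :: "real^'d \<Rightarrow> real"
  assumes "goodF F" "\<And>y. y \<in> convex hull F \<Longrightarrow> g y = h y"
  shows "face_int F g = face_int F h"
  unfolding face_int_alt
proof (rule integral_cong)
  fix x assume "x \<in> prism F"
  then have "projF F x \<in> convex hull F" by (rule proj_in[OF assms(1)])
  then show "g (projF F x) = h (projF F x)" by (rule assms(2))
qed

lemma proj_norm_le:
  fixes n v :: "'a::real_inner"
  assumes "norm n = 1"
  shows "norm (v - (v \<bullet> n) *\<^sub>R n) \<le> norm v"
proof -
  define c where "c = v \<bullet> n"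
  have nn: "n \<bullet> n = 1" using assms by (simp add: norm_eq_1)
  have "(v - c *\<^sub>R n) \<bullet> (v - c *\<^sub>R n) = v \<bullet> v - c * (v \<bullet> n) - c * (n \<bullet> v) + c * c * (n \<bullet> n)"
    by (simp only: inner_diff_left inner_diff_right inner_scaleR_left inner_scaleR_right) (simp add: algebra_simps)
  also have "\<dots> = v \<bullet> v - c * c" using nn unfolding c_def by (simp add: inner_commute)
  finally have "(norm (v - c *\<^sub>R n))\<^sup>2 = v \<bullet> v - c * c"
    by (simp only: power2_norm_eq_inner)
  also have "\<dots> \<le> (norm v)\<^sup>2" by (simp add: power2_norm_eq_inner)
  finally show ?thesis unfolding c_def by (rule power2_le_imp_le) simp
qed

lemma face_int_sq_zero:
  fixes F :: "(real^'d) set" and g :: "real^'d \<Rightarrow> real"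
  assumes good: "goodF F" and gc: "continuous_on (convex hull F) g"
    and z: "face_int F (\<lambda>x. g x * g x) = 0"
  shows "\<forall>y\<in>convex hull F. g y = 0"
proof (rule ccontr)
  assume "\<not> (\<forall>y\<in>convex hull F. g y = 0)"
  then obtain y0 where y0: "y0 \<in> convex hull F" "g y0 \<noteq> 0" by blast
  let ?n = "fnrm F" and ?p = "SOME p. p \<in> F"
  have n1: "norm ?n = 1" using goodF_facts(1)[OF good] .
  have nn: "?n \<bullet> ?n = 1" using n1 by (simp add: norm_eq_1)
  have Hull: "affine hull F = {x. ?n \<bullet> (x - ?p) = 0}" using goodF_facts(4)[OF good] .
  obtain d where d: "d > 0" "\<forall>y\<in>convex hull F. dist y y0 < d \<longrightarrow> dist (g y) (g y0) < \<bar>g y0\<bar>"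
    using gc y0 unfolding continuous_on_iff by (metis zero_less_abs_iff)
  have "y0 \<in> closure (rel_interior (convex hull F))"
    using y0(1) convex_closure_rel_interior[OF convex_convex_hull, of F] closure_subset by blast
  then obtain y1 where y1r: "y1 \<in> rel_interior (convex hull F)" "dist y1 y0 < d"
    using d(1) unfolding closure_approachable by blast
  have y1: "y1 \<in> convex hull F" using y1r(1) rel_interior_subset by blast
  have gy1: "g y1 \<noteq> 0" using d(2) y1 y1r(2) by (auto simp: dist_real_def)
  obtain e where e: "e > 0" "ball y1 e \<inter> affine hull (convex hull F) \<subseteq> convex hull F"
    using y1r(1) unfolding mem_rel_interior_ball by blast
  define c where "c = g y1 * g y1"
  have c: "c > 0" using gy1 unfolding c_def by (metis not_real_square_gt_zero)
  have gc2: "continuous_on (convex hull F) (\<lambda>y. g y * g y)" using gc by (intro continuous_intros)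
  obtain d1 where d1: "d1 > 0" "\<forall>y\<in>convex hull F. dist y y1 < d1 \<longrightarrow> dist (g y * g y) c < c / 2"
    using gc2 y1 c unfolding continuous_on_iff c_def by (metis half_gt_zero)
  define r where "r = min (min e d1) (1/2)"
  have r: "r > 0" "r \<le> e" "r \<le> d1" "r \<le> 1/2" unfolding r_def using e d1 by auto
  define z0 where "z0 = y1 + (1/2) *\<^sub>R ?n"
  have y1h: "?n \<bullet> (y1 - ?p) = 0" using convF_hyper[OF good y1] .
  have inball: "z \<in> prism F \<and> c / 2 < g (projF F z) * g (projF F z)" if zb: "dist z z0 < r" for z
  proof -
    define t where "t = (z - ?p) \<bullet> ?n"
    define w where "w = projF F z"
    have w: "w = z - t *\<^sub>R ?n" unfolding w_def projF_def t_def by simp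
    have "?n \<bullet> (w - ?p) = ?n \<bullet> (z - ?p) - t * (?n \<bullet> ?n)"
      unfolding w by (simp add: inner_diff_right algebra_simps)
    then have wh: "?n \<bullet> (w - ?p) = 0" unfolding t_def using nn by (simp add: inner_commute)
    have tz: "t = (z - z0) \<bullet> ?n + 1/2"
    proof -
      have "z - ?p = (z - z0) + (y1 - ?p) + (1/2) *\<^sub>R ?n" unfolding z0_def by simp
      then have "t = (z - z0) \<bullet> ?n + (y1 - ?p) \<bullet> ?n + (1/2) * (?n \<bullet> ?n)"
        unfolding t_def by (simp only: inner_add_left inner_scaleR_left)
      then show ?thesis using y1h nn by (simp add: inner_commute)
    qed
    have wy: "w - y1 = (z - z0) - ((z - z0) \<bullet> ?n) *\<^sub>R ?n"
      unfolding w tz z0_def by (simp add: algebra_simps)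
    have "norm (w - y1) \<le> norm (z - z0)" unfolding wy by (rule proj_norm_le[OF n1])
    then have dw: "dist w y1 < r" using zb by (simp add: dist_norm)
    have "w \<in> affine hull (convex hull F)" using wh Hull by simp
    then have wF: "w \<in> convex hull F" using e(2) dw r(2) by (auto simp: dist_commute)
    have "\<bar>(z - z0) \<bullet> ?n\<bar> \<le> norm (z - z0) * norm ?n" by (rule Cauchy_Schwarz_ineq2)
    then have "\<bar>(z - z0) \<bullet> ?n\<bar> < r" using zb n1 by (simp add: dist_norm)
    then have t01: "t \<in> {0..1}" using tz r(4) by auto
    have "z = w + t *\<^sub>R ?n" unfolding w by simp
    then have zP: "z \<in> prism F" unfolding prism_def using wF t01 by blast
    have "dist (g w * g w) c < c / 2" using d1(2) wF dw r(3) by auto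
    then have "\<bar>g w * g w - c\<bar> < c / 2" unfolding dist_real_def .
    then have "c / 2 < g w * g w" by linarith
    then show ?thesis using zP unfolding w_def by simp
  qed
  define s where "s = r / (2 * real CARD('d))"
  have s: "s > 0" unfolding s_def using r by simp
  define B where "B = cbox (z0 - s *\<^sub>R 1) (z0 + s *\<^sub>R 1)"
  have Bball: "dist z z0 < r" if "z \<in> B" for z
  proof -
    have "\<bar>(z - z0) $ i\<bar> \<le> s" for i
    proof -
      have "z0 $ i - s \<le> z $ i \<and> z $ i \<le> z0 $ i + s" using that unfolding B_def mem_box_cart by simp
      then show ?thesis by (simp add: abs_le_iff)
    qed
    then have "(\<Sum>i\<in>UNIV. \<bar>(z - z0) $ i\<bar>) \<le> (\<Sum>i\<in>(UNIV::'d set). s)" by (intro sum_mono) auto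
    also have "\<dots> = r / 2" unfolding s_def by simp
    finally have "norm (z - z0) \<le> r / 2" using norm_le_l1_cart[of "z - z0"] by linarith
    then show ?thesis using r by (simp add: dist_norm)
  qed
  have BP: "B \<subseteq> prism F" using inball Bball by blast
  let ?h = "\<lambda>x. g (projF F x) * g (projF F x)"
  have hc: "continuous_on (prism F) ?h" using fi_cont[OF good gc2] by simp
  have hP: "?h integrable_on prism F" by (rule integrable_compact[OF compact_prism[OF good] hc])
  have hB: "?h integrable_on B" unfolding B_def
    by (rule integrable_compact[OF compact_cbox continuous_on_subset[OF hc BP[unfolded B_def]]])
  have "integral B (\<lambda>x. c / 2) \<le> integral B ?h"
    by (rule integral_le[OF _ hB]) (use inball Bball in \<open>auto simp: B_def less_imp_le\<close>)
  also have "\<dots> \<le> integral (prism F) ?h"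
    by (rule integral_subset_le[OF BP hB hP]) auto
  also have "\<dots> = 0" using z unfolding face_int_alt by simp
  finally have le: "integral B (\<lambda>x. c / 2) \<le> 0" .
  have "z0 \<in> B" unfolding B_def mem_box_cart using s by simp
  then have Bne: "B \<noteq> {}" by blast
  have "Henstock_Kurzweil_Integration.content B = (\<Prod>i\<in>UNIV. (z0 + s *\<^sub>R 1) $ i - (z0 - s *\<^sub>R 1) $ i)"
    unfolding B_def by (rule content_cbox_cart) (use Bne B_def in simp)
  also have "\<dots> = (\<Prod>i\<in>(UNIV::'d set). 2 * s)" by simp
  finally have "Henstock_Kurzweil_Integration.content B > 0" using s by simp
  then have "integral B (\<lambda>x. c / 2) > 0" unfolding B_def using c by simp
  then show False using le by simp
qed

lemma kgrad_dot_expand: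
  fixes K :: "real^'d^'d"
  shows "(K *v g) \<bullet> w = (\<Sum>i\<in>UNIV. \<Sum>j\<in>UNIV. (K $ i $ j * w $ i) * g $ j)"
  unfolding matrix_vector_mult_def inner_vec_def
  by (simp add: sum_distrib_left sum_distrib_right algebra_simps)

lemma polyk_kgrad_dot:
  fixes K :: "real^'d^'d"
  assumes "polyk k p"
  shows "polyk k (\<lambda>x. (K *v grad p x) \<bullet> w)"
  unfolding kgrad_dot_expand
  by (intro polyk_sum polyk_scale polyk_grad[OF assms]) simp_all

lemma cont_grad:
  assumes "polyk k p"
  shows "continuous_on S (\<lambda>x. grad p x)"
proof -
  have "(\<lambda>x. grad p x) = (\<lambda>x. \<chi> i. grad p x $ i)" by simp
  moreover have "continuous_on S (\<lambda>x. \<chi> i. grad p x $ i)"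
    by (intro continuous_on_vec_lambda polyk_cont[OF polyk_grad[OF assms]])
  ultimately show ?thesis by simp
qed

lemma cont_Kgrad:
  fixes K :: "real^'d^'d"
  assumes "polyk k p"
  shows "continuous_on S (\<lambda>x. K *v grad p x)"
proof -
  have c: "continuous_on S (\<lambda>x. grad p x $ j)" for j by (rule polyk_cont[OF polyk_grad[OF assms]])
  show ?thesis unfolding matrix_vector_mult_def
    by (intro continuous_on_vec_lambda continuous_on_sum continuous_on_mult continuous_on_const c)
qed

lemma grad_zero: "grad (\<lambda>x. 0) x = (0 :: real^'d)"
proof -
  have "frechet_derivative (\<lambda>x::real^'d. 0::real) (at x) = (\<lambda>h. 0)"
    by (rule frechet_derivative_at[OF has_derivative_const, symmetric])
  then show ?thesis unfolding grad_def by (simp add: vec_eq_iff)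
qed

lemma faces_finite: "finite E \<Longrightarrow> finite (faces E)"
proof -
  assume "finite E"
  moreover have "faces E = (\<lambda>p. E - {p}) ` E" unfolding faces_def by auto
  ultimately show ?thesis by simp
qed

lemma bdry_pair_zero: "bdry_pair T (\<lambda>E F x. 0) = 0"
  unfolding bdry_pair_def by (simp add: face_int_zero)

lemma kE_pos:
  fixes T :: "(real^'d) set set"
  assumes simplex: "\<forall>E\<in>T. card E = CARD('d) + 1 \<and> \<not> affine_dependent E"
    and domain: "\<Omega> = interior (\<Union>E\<in>T. convex hull E)"
    and kappa_ae: "AE x in lebesgue. x \<in> \<Omega> \<longrightarrow> transpose (kappa x) = kappa x \<and>
         (\<forall>\<xi>. kmin * (norm \<xi>)^2 \<le> \<xi> \<bullet> (kappa x *v \<xi>) \<and> \<xi> \<bullet> (kappa x *v \<xi>) \<le> kmax * (norm \<xi>)^2)"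
    and kappa_pw: "\<forall>E\<in>T. \<exists>K. \<forall>x\<in>interior (convex hull E). kappa x = K"
    and E: "E \<in> T"
  shows "kmin * (norm \<xi>)^2 \<le> \<xi> \<bullet> (kE kappa E *v \<xi>)"
proof -
  have cE: "card E = CARD('d) + 1" and aE: "\<not> affine_dependent E" using simplex E by auto
  have fE: "finite E" using cE by (intro card_ge_0_finite) simp
  let ?I = "interior (convex hull E)"
  have "centroid E \<in> ?I"
  proof -
    have I: "?I = {y. \<exists>u. (\<forall>x \<in> E. 0 < u x) \<and> sum u E = 1 \<and> (\<Sum>x\<in>E. u x *\<^sub>R x) = y}"
      using interior_convex_hull_explicit_minimal[OF aE] cE by simp
    have "(\<forall>x \<in> E. 0 < (\<lambda>_. 1 / real (card E)) x) \<and> sum (\<lambda>_. 1 / real (card E)) E = 1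
       \<and> (\<Sum>x\<in>E. (\<lambda>_. 1 / real (card E)) x *\<^sub>R x) = centroid E"
      using cE unfolding centroid_def by (simp add: scaleR_sum_right)
    then show ?thesis unfolding I by (intro CollectI exI[of _ "\<lambda>_. 1 / real (card E)"])
  qed
  obtain K where K: "\<forall>x\<in>?I. kappa x = K" using kappa_pw E by blast
  have kEK: "kE kappa E = K" unfolding kE_def using K \<open>centroid E \<in> ?I\<close> by simp
  have IO: "?I \<subseteq> \<Omega>" unfolding domain using E by (intro interior_mono) blast
  let ?P = "\<lambda>x. x \<in> \<Omega> \<longrightarrow> transpose (kappa x) = kappa x \<and>
         (\<forall>\<xi>. kmin * (norm \<xi>)^2 \<le> \<xi> \<bullet> (kappa x *v \<xi>) \<and> \<xi> \<bullet> (kappa x *v \<xi>) \<le> kmax * (norm \<xi>)^2)"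
  obtain N where N: "{x \<in> space lebesgue. \<not> ?P x} \<subseteq> N" "emeasure lebesgue N = 0" "N \<in> sets lebesgue"
    using AE_E[OF kappa_ae] by blast
  have "\<exists>x\<in>?I. ?P x"
  proof (rule ccontr)
    assume "\<not> (\<exists>x\<in>?I. ?P x)"
    then have "?I \<subseteq> N" using N(1) by auto
    moreover have "negligible N" unfolding negligible_iff_null_sets using N(2,3) by (simp add: null_sets_def)
    ultimately have "negligible ?I" by (rule negligible_subset[rotated])
    moreover have "?I \<noteq> {}" using \<open>centroid E \<in> ?I\<close> by blast
    ultimately show False using open_not_negligible[OF open_interior] by blast
  qed
  then obtain x where x: "x \<in> ?I" "?P x" by blast
  then have "kmin * (norm \<xi>)^2 \<le> \<xi> \<bullet> (kappa x *v \<xi>)" using IO by blast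
  then show ?thesis using K x(1) kEK by simp
qed

lemma hE_pos:
  fixes E :: "(real^'d) set"
  assumes "card E = CARD('d) + 1" "\<not> affine_dependent E" "F \<in> faces E"
  shows "hE E > 0"
proof -
  obtain q where q: "q \<in> E" "F = E - {q}" "finite E" "F \<noteq> {}"
    by (rule face_basic[OF assms])
  then obtain p where p: "p \<in> E" "p \<noteq> q" by blast
  have "bounded (convex hull E)" using q(3) by (intro compact_imp_bounded compact_convex_hull finite_imp_compact)
  then have "dist p q \<le> hE E" unfolding hE_def
    by (rule diameter_bounded_bound) (use p q in \<open>auto intro: hull_inc\<close>)
  moreover have "dist p q > 0" using p by simp
  ultimately show ?thesis by linarith
qed

lemma scal1:
  fixes x1 x2 y1 y2 u1 u2 U t1 t2 :: real
  assumes S: "t1 + t2 \<noteq> 0"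
    and H: "(- x1 + t1 * (u1 - U)) + (x2 + t2 * (u2 - U)) = 0"
  shows "- y1 * (u1 - U) + y2 * (u2 - U) =
    - (((1 - t1 / (t1 + t2)) * y1 + (1 - t2 / (t1 + t2)) * y2) * (u1 - u2))
    - (1 / (t1 + t2)) * (x1 - x2) * (y1 - y2)"
proof -
  define r where "r = 1 / (t1 + t2)"
  have r: "r * (t1 + t2) = 1" using S unfolding r_def by simp
  have e: "t1 / (t1 + t2) = t1 * r" "t2 / (t1 + t2) = t2 * r" unfolding r_def by simp_all
  show ?thesis unfolding e r_def[symmetric] using r H by algebra
qed

lemma scal2:
  fixes x1 x2 u1 u2 U v1 v2 V t1 t2 :: real
  assumes S: "t1 + t2 \<noteq> 0"
    and H: "(- x1 + t1 * (u1 - U)) + (x2 + t2 * (u2 - U)) = 0"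
  shows "(- x1 + t1 * (u1 - U)) * (v1 - V) + (x2 + t2 * (u2 - U)) * (v2 - V) =
    - (((1 - t1 / (t1 + t2)) * x1 + (1 - t2 / (t1 + t2)) * x2) * (v1 - v2))
    + (t1 * t2 / (t1 + t2)) * ((u1 - u2) * (v1 - v2))"
proof -
  define r where "r = 1 / (t1 + t2)"
  have r: "r * (t1 + t2) = 1" using S unfolding r_def by simp
  have e: "t1 / (t1 + t2) = t1 * r" "t2 / (t1 + t2) = t2 * r" "t1 * t2 / (t1 + t2) = t1 * t2 * r"
    unfolding r_def by simp_all
  show ?thesis unfolding e using r H by algebra
qed

lemma vec1:
  fixes a1 a2 b1 b2 n :: "real^'d" and u1 u2 U t1 t2 :: real
  assumes nn: "n \<bullet> n = 1" and S: "t1 + t2 \<noteq> 0"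
    and H: "(- (a1 \<bullet> n) + t1 * (u1 - U)) + (- (a2 \<bullet> (- n)) + t2 * (u2 - U)) = 0"
  shows "(- b1) \<bullet> ((u1 - U) *\<^sub>R n) + (- b2) \<bullet> ((u2 - U) *\<^sub>R (- n)) =
    - (((1 - t1 / (t1 + t2)) *\<^sub>R b1 + (1 - t2 / (t1 + t2)) *\<^sub>R b2) \<bullet> (u1 *\<^sub>R n + u2 *\<^sub>R (- n)))
    - 1 / (t1 + t2) * (a1 \<bullet> n + a2 \<bullet> (- n)) * (b1 \<bullet> n + b2 \<bullet> (- n))"
proof -
  have H': "(- (a1 \<bullet> n) + t1 * (u1 - U)) + ((a2 \<bullet> n) + t2 * (u2 - U)) = 0"
    using H by (simp only: inner_minus_right minus_minus)
  have L: "(- b1) \<bullet> ((u1 - U) *\<^sub>R n) + (- b2) \<bullet> ((u2 - U) *\<^sub>R (- n)) = - (b1 \<bullet> n) * (u1 - U) + (b2 \<bullet> n) * (u2 - U)"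
    by (simp add: inner_minus_left inner_minus_right)
  have R: "((w1 *\<^sub>R b1 + w2 *\<^sub>R b2) \<bullet> (u1 *\<^sub>R n + u2 *\<^sub>R (- n)))
     = (w1 * (b1 \<bullet> n) + w2 * (b2 \<bullet> n)) * (u1 - u2)" for w1 w2
    by (simp add: inner_add_left inner_add_right inner_minus_right algebra_simps)
  have R2: "(a1 \<bullet> n + a2 \<bullet> (- n)) = (a1 \<bullet> n) - (a2 \<bullet> n)" "(b1 \<bullet> n + b2 \<bullet> (- n)) = (b1 \<bullet> n) - (b2 \<bullet> n)"
    by (simp_all add: inner_minus_right)
  show ?thesis unfolding L R R2 by (rule scal1[OF S H'])
qed

lemma vec2:
  fixes a1 a2 n :: "real^'d" and u1 u2 U v1 v2 V t1 t2 :: real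
  assumes nn: "n \<bullet> n = 1" and S: "t1 + t2 \<noteq> 0"
    and H: "(- (a1 \<bullet> n) + t1 * (u1 - U)) + (- (a2 \<bullet> (- n)) + t2 * (u2 - U)) = 0"
  shows "(- a1 + t1 *\<^sub>R ((u1 - U) *\<^sub>R n)) \<bullet> ((v1 - V) *\<^sub>R n) + (- a2 + t2 *\<^sub>R ((u2 - U) *\<^sub>R (- n))) \<bullet> ((v2 - V) *\<^sub>R (- n)) =
    - (((1 - t1 / (t1 + t2)) *\<^sub>R a1 + (1 - t2 / (t1 + t2)) *\<^sub>R a2) \<bullet> (v1 *\<^sub>R n + v2 *\<^sub>R (- n)))
    + t1 * t2 / (t1 + t2) * ((u1 *\<^sub>R n + u2 *\<^sub>R (- n)) \<bullet> (v1 *\<^sub>R n + v2 *\<^sub>R (- n)))"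
proof -
  have H': "(- (a1 \<bullet> n) + t1 * (u1 - U)) + ((a2 \<bullet> n) + t2 * (u2 - U)) = 0"
    using H by (simp only: inner_minus_right minus_minus)
  have L: "(- a1 + t1 *\<^sub>R ((u1 - U) *\<^sub>R n)) \<bullet> ((v1 - V) *\<^sub>R n) + (- a2 + t2 *\<^sub>R ((u2 - U) *\<^sub>R (- n))) \<bullet> ((v2 - V) *\<^sub>R (- n))
     = (- (a1 \<bullet> n) + t1 * (u1 - U)) * (v1 - V) + ((a2 \<bullet> n) + t2 * (u2 - U)) * (v2 - V)"
    using nn by (simp add: inner_add_left inner_minus_left inner_minus_right algebra_simps)
  have R: "((w1 *\<^sub>R a1 + w2 *\<^sub>R a2) \<bullet> (v1 *\<^sub>R n + v2 *\<^sub>R (- n)))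
     = (w1 * (a1 \<bullet> n) + w2 * (a2 \<bullet> n)) * (v1 - v2)" for w1 w2
    by (simp add: inner_add_left inner_add_right inner_minus_right algebra_simps)
  have R2: "((u1 *\<^sub>R n + u2 *\<^sub>R (- n)) \<bullet> (v1 *\<^sub>R n + v2 *\<^sub>R (- n))) = (u1 - u2) * (v1 - v2)"
    using nn by (simp add: inner_add_left inner_add_right inner_minus_right inner_minus_left algebra_simps)
  show ?thesis unfolding L R R2 by (rule scal2[OF S H'])
qed

lemma cont_mean_star:
  fixes \<phi> :: "(real^'d) set \<Rightarrow> real^'d \<Rightarrow> real^'d"
  assumes "\<And>E. E \<in> elems T F \<Longrightarrow> continuous_on S (\<phi> E)"
  shows "continuous_on S (mean_star T tau F \<phi>)"
proof (cases "F \<in> Fb T")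
  case True
  then have e: "mean_star T tau F \<phi> = (\<lambda>x. \<Sum>E\<in>elems T F. \<phi> E x)" unfolding mean_star_def by (intro ext) simp
  show ?thesis unfolding e by (intro continuous_on_sum assms)
next
  case False
  then have e: "mean_star T tau F \<phi> = (\<lambda>x. \<Sum>E\<in>elems T F. (1 - tau E F / (\<Sum>E'\<in>elems T F. tau E' F)) *\<^sub>R \<phi> E x)"
    unfolding mean_star_def by (intro ext) simp
  show ?thesis unfolding e by (intro continuous_on_sum continuous_on_scaleR continuous_on_const assms)
qed

lemma cont_jumpS:
  assumes "\<And>E. E \<in> elems T F \<Longrightarrow> continuous_on S (\<phi> E)"
  shows "continuous_on S (jumpS T F \<phi>)"
proof -
  have e: "jumpS T F \<phi> = (\<lambda>x. \<Sum>E\<in>elems T F. \<phi> E x *\<^sub>R nrm E F)" unfolding jumpS_def by (intro ext) simp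
  show ?thesis unfolding e by (intro continuous_on_sum continuous_on_scaleR continuous_on_const assms)
qed

lemma cont_jumpV:
  assumes "\<And>E. E \<in> elems T F \<Longrightarrow> continuous_on S (\<phi> E)"
  shows "continuous_on S (jumpV T F \<phi>)"
proof -
  have e: "jumpV T F \<phi> = (\<lambda>x. \<Sum>E\<in>elems T F. \<phi> E x \<bullet> nrm E F)" unfolding jumpV_def by (intro ext) simp
  show ?thesis unfolding e by (intro continuous_on_sum continuous_on_inner continuous_on_const assms)
qed

lemma cont_hjump:
  assumes "continuous_on S (u E)" "continuous_on S (uh F)"
  shows "continuous_on S (hjump u uh E F)"
proof -
  have e: "hjump u uh E F = (\<lambda>x. (u E x - uh F x) *\<^sub>R nrm E F)" unfolding hjump_def by (intro ext) simp
  show ?thesis unfolding e by (intro continuous_intros assms)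
qed

lemma cont_sighat:
  assumes "continuous_on S (kgrad kappa u E)" "continuous_on S (u E)" "continuous_on S (uh F)"
  shows "continuous_on S (sighat kappa tau u uh E F)"
proof -
  have e: "sighat kappa tau u uh E F = (\<lambda>x. - kgrad kappa u E x + tau E F *\<^sub>R hjump u uh E F x)"
    unfolding sighat_def by (intro ext) simp
  show ?thesis unfolding e by (intro continuous_intros assms cont_hjump)
qed

lemma kgrad_eq: "kgrad kappa u E = (\<lambda>x. kE kappa E *v grad (u E) x)"
  unfolding kgrad_def by (intro ext) simp

lemma polyk_diff: "polyk k p \<Longrightarrow> polyk k q \<Longrightarrow> polyk k (\<lambda>x. p x - q x)"
  using polyk_add[OF _ polyk_neg, of k p q] by simp

theorem mainTheorem3:
  fixes T :: "(real^'d) set set" and \<Omega> :: "(real^'d) set"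
    and kappa :: "real^'d \<Rightarrow> real^'d^'d" and kmin kmax :: real
    and k :: nat and \<alpha>0 CT eps :: real and f :: "real^'d \<Rightarrow> real"
    and u uh :: "(real^'d) set \<Rightarrow> real^'d \<Rightarrow> real"
  assumes dim: "CARD('d) \<in> {2, 3}"
    and mesh_fin: "finite T" and mesh_ne: "T \<noteq> {}"
    and simplex: "\<forall>E\<in>T. card E = CARD('d) + 1 \<and> \<not> affine_dependent E"
    and conforming: "\<forall>E1\<in>T. \<forall>E2\<in>T. convex hull E1 \<inter> convex hull E2 = convex hull (E1 \<inter> E2)"
    and domain: "\<Omega> = interior (\<Union>E\<in>T. convex hull E)" and conn: "connected \<Omega>"
    and hle1: "\<forall>E\<in>T. hE E \<le> 1"
    and kpos: "0 < kmin" and kle: "kmin \<le> kmax"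
    and kappa_ae: "AE x in lebesgue. x \<in> \<Omega> \<longrightarrow> transpose (kappa x) = kappa x \<and>
         (\<forall>\<xi>. kmin * (norm \<xi>)^2 \<le> \<xi> \<bullet> (kappa x *v \<xi>) \<and> \<xi> \<bullet> (kappa x *v \<xi>) \<le> kmax * (norm \<xi>)^2)"
    and kappa_pw: "\<forall>E\<in>T. \<exists>K. \<forall>x\<in>interior (convex hull E). kappa x = K"
    and k1: "k \<ge> 1"
    and CTpos: "CT > 0"
    and trace_ineq: "\<forall>E\<in>T. \<forall>F\<in>faces E. \<forall>w. polyk k w \<longrightarrow>
         face_int F (\<lambda>x. (w x)^2) \<le> CT^2 / hE E * integral (convex hull E) (\<lambda>x. (w x)^2)"
    and a0: "\<alpha>0 > 0"
    and eps: "eps \<in> {-1, 0, 1}"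
    and fL2: "f measurable_on \<Omega>" "(\<lambda>x. (f x)^2) integrable_on \<Omega>"
    and uVh: "Vh k T u" and uhV: "Vhat k T uh"
    and solves: "\<forall>v vh. Vh k T v \<and> Vhat k T vh \<longrightarrow>
         aH T kappa (tauf \<alpha>0 CT kappa) eps u uh v vh
           = (\<Sum>E\<in>T. integral (convex hull E) (\<lambda>x. f x * v E x))"
  shows "\<forall>v vh. Vh k T v \<and> Vhat k T vh \<longrightarrow>
      bdry_pair T (\<lambda>E F x. (- kgrad kappa v E x) \<bullet> hjump u uh E F x)
        = - (\<Sum>F\<in>Fh T. face_int F (\<lambda>x.
               mean_star T (tauf \<alpha>0 CT kappa) F (kgrad kappa v) x \<bullet> jumpS T F u x))
          - (\<Sum>F\<in>Fi T. face_int F (\<lambda>x.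
               rho1 T (tauf \<alpha>0 CT kappa) F * jumpV T F (kgrad kappa u) x * jumpV T F (kgrad kappa v) x))
    \<and> bdry_pair T (\<lambda>E F x. sighat kappa (tauf \<alpha>0 CT kappa) u uh E F x \<bullet> hjump v vh E F x)
        = - (\<Sum>F\<in>Fh T. face_int F (\<lambda>x.
               mean_star T (tauf \<alpha>0 CT kappa) F (kgrad kappa u) x \<bullet> jumpS T F v x))
          + (\<Sum>F\<in>Fh T. face_int F (\<lambda>x.
               rho0 T (tauf \<alpha>0 CT kappa) F * (jumpS T F u x \<bullet> jumpS T F v x)))"
proof -
  let ?tau = "tauf \<alpha>0 CT kappa"
  have S: "\<And>E. E \<in> T \<Longrightarrow> card E = CARD('d) + 1 \<and> \<not> affine_dependent E" using simplex by blast
  have finE: "\<And>E. E \<in> T \<Longrightarrow> finite E" by (intro card_ge_0_finite) (simp add: S)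
  have finFh: "finite (Fh T)" unfolding Fh_def
    by (intro finite_UN_I mesh_fin faces_finite finE)
  have elemsD: "\<And>E F. E \<in> elems T F \<Longrightarrow> E \<in> T \<and> F \<in> faces E" unfolding elems_def by blast
  have finEl: "\<And>F. finite (elems T F)" unfolding elems_def using mesh_fin by simp
  have Fh_ex: "\<And>F. F \<in> Fh T \<Longrightarrow> \<exists>E\<in>T. F \<in> faces E" unfolding Fh_def by blast
  have facesFh: "\<And>E F. E \<in> T \<Longrightarrow> F \<in> faces E \<Longrightarrow> F \<in> Fh T" unfolding Fh_def by blast
  have FiFh: "\<And>F. F \<in> Fi T \<Longrightarrow> F \<in> Fh T" unfolding Fi_def by blast
  have FbFh: "\<And>F. F \<in> Fb T \<Longrightarrow> F \<in> Fh T" unfolding Fb_def by blast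
  have FiFb: "\<And>F. F \<in> Fi T \<Longrightarrow> F \<notin> Fb T" unfolding Fi_def Fb_def by auto
  have good: "\<And>F. F \<in> Fh T \<Longrightarrow> goodF F"
  proof -
    fix F assume "F \<in> Fh T"
    then obtain E where E: "E \<in> T" "F \<in> faces E" using Fh_ex by blast
    have SE: "card E = CARD('d) + 1" "\<not> affine_dependent E" using S[OF E(1)] by auto
    obtain q where "q \<in> E" "F = E - {q}" "finite E" "finite F" "card F = CARD('d)"
      "\<not> affine_dependent F" "F \<noteq> {}" "q \<notin> F" by (rule face_basic[OF SE E(2)])
    then show "goodF F" unfolding goodF_def by simp
  qed
  have nrm1: "\<And>E F. E \<in> T \<Longrightarrow> F \<in> faces E \<Longrightarrow> norm (nrm E F) = 1"
  proof -
    fix E F assume E: "E \<in> T" "F \<in> faces E"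
    have SE: "card E = CARD('d) + 1" "\<not> affine_dependent E" using S[OF E(1)] by auto
    obtain q where "q \<in> E" "F = E - {q}" by (rule face_basic[OF SE E(2)])
    then show "norm (nrm E F) = 1" using nrm_props(1)[OF SE] by blast
  qed
  have nn: "\<And>E F. E \<in> T \<Longrightarrow> F \<in> faces E \<Longrightarrow> nrm E F \<bullet> nrm E F = 1"
    using nrm1 by (simp add: norm_eq_1)
  have tpos: "\<And>E F. E \<in> T \<Longrightarrow> F \<in> faces E \<Longrightarrow> ?tau E F > 0"
  proof -
    fix E F assume E: "E \<in> T" "F \<in> faces E"
    have SE: "card E = CARD('d) + 1" "\<not> affine_dependent E" using S[OF E(1)] by auto
    have "kmin * (norm (nrm E F))^2 \<le> nrm E F \<bullet> (kE kappa E *v nrm E F)"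
      by (rule kE_pos[OF simplex domain kappa_ae kappa_pw E(1)])
    then have "0 < nrm E F \<bullet> (kE kappa E *v nrm E F)" using nrm1[OF E] kpos by simp
    moreover have "0 < hE E" by (rule hE_pos[OF SE E(2)])
    ultimately show "?tau E F > 0" unfolding tauf_def using a0 CTpos by simp
  qed
  have split: "(F \<in> Fb T \<and> (\<exists>E. elems T F = {E})) \<or>
      (F \<in> Fi T \<and> F \<notin> Fb T \<and> (\<exists>E1 E2. elems T F = {E1, E2} \<and> E1 \<noteq> E2 \<and> nrm E2 F = - nrm E1 F))"
    if F: "F \<in> Fh T" for F
  proof -
    obtain E0 where E0: "E0 \<in> T" "F \<in> faces E0" using Fh_ex[OF F] by blast
    then have E0e: "E0 \<in> elems T F" unfolding elems_def by blast
    show ?thesis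
    proof (cases "card (elems T F) = 1")
      case True
      then have Fb: "F \<in> Fb T" using F unfolding Fb_def by blast
      from True obtain E where "elems T F = {E}" by (auto simp: card_1_singleton_iff)
      then show ?thesis using Fb by blast
    next
      case False
      have "card (elems T F) \<noteq> 0" using E0e finEl[of F] by auto
      then have "card (elems T F) \<ge> 2" using False by linarith
      then have "card (elems T F - {E0}) \<noteq> 0" using E0e finEl[of F] by (simp add: card_Diff_singleton)
      then have "elems T F - {E0} \<noteq> {}" by (metis card.empty)
      then obtain E1 where E1: "E1 \<in> elems T F" "E1 \<noteq> E0" by blast
      have opp: "nrm Eb F = - nrm Ea F" if "Ea \<in> elems T F" "Eb \<in> elems T F" "Ea \<noteq> Eb" for Ea Eb
      proof -
        have a: "Ea \<in> T" "F \<in> faces Ea" using elemsD[OF that(1)] by auto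
        have b: "Eb \<in> T" "F \<in> faces Eb" using elemsD[OF that(2)] by auto
        show ?thesis by (rule opposite_normals[OF simplex conforming a(1) b(1) that(3) a(2) b(2)])
      qed
      have all: "E3 = E0 \<or> E3 = E1" if "E3 \<in> elems T F" for E3
      proof (rule ccontr)
        assume "\<not> (E3 = E0 \<or> E3 = E1)"
        then have ne: "E0 \<noteq> E3" "E1 \<noteq> E3" by auto
        have a: "nrm E3 F = - nrm E0 F" by (rule opp[OF E0e that ne(1)])
        have b: "nrm E3 F = - nrm E1 F" by (rule opp[OF E1(1) that ne(2)])
        have c: "nrm E1 F = - nrm E0 F" by (rule opp[OF E0e E1(1) E1(2)[symmetric]])
        have "- nrm E0 F = - nrm E1 F" using a b by simp
        then have "nrm E0 F = nrm E1 F" by simp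
        then have eq: "nrm E0 F = - nrm E0 F" using c by simp
        have "nrm E0 F + nrm E0 F = nrm E0 F + - nrm E0 F" by (subst (2) eq) (rule refl)
        then have "nrm E0 F + nrm E0 F = 0" by simp
        then have "(2::real) *\<^sub>R nrm E0 F = 0" by (simp only: scaleR_2)
        then have "nrm E0 F = 0" by simp
        then show False using nrm1[OF E0] by simp
      qed
      have el: "elems T F = {E0, E1}" using all E0e E1 by blast
      then have "card (elems T F) = 2" using E1 by simp
      then have Fi: "F \<in> Fi T" using F unfolding Fi_def by blast
      have o: "nrm E1 F = - nrm E0 F" by (rule opp[OF E0e E1(1) E1(2)[symmetric]])
      show ?thesis
        by (intro disjI2 conjI exI[of _ E0] exI[of _ E1] Fi FiFb el o) (use E1(2) in auto)
    qed
  qed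
  have polyU: "\<And>E. E \<in> T \<Longrightarrow> polyk k (u E)" using uVh unfolding Vh_def by blast
  have uhP: "\<And>F. F \<in> Fh T \<Longrightarrow> \<exists>P. polyk k P \<and> (\<forall>x\<in>convex hull F. uh F x = P x)"
    using uhV unfolding Vhat_def by blast
  have uhB: "\<And>F x. F \<in> Fb T \<Longrightarrow> x \<in> convex hull F \<Longrightarrow> uh F x = 0"
    using uhV FbFh unfolding Vhat_def by blast
  have contU: "\<And>E S. E \<in> T \<Longrightarrow> continuous_on S (u E)" using polyU polyk_cont by blast
  have contKU: "\<And>E S. E \<in> T \<Longrightarrow> continuous_on S (kgrad kappa u E)"
    unfolding kgrad_eq using polyU cont_Kgrad by blast
  have contUh: "\<And>F. F \<in> Fh T \<Longrightarrow> continuous_on (convex hull F) (uh F)"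
  proof -
    fix F assume "F \<in> Fh T"
    then obtain P where P: "polyk k P" "\<forall>x\<in>convex hull F. uh F x = P x" using uhP by blast
    show "continuous_on (convex hull F) (uh F)"
      using continuous_on_cong[of "convex hull F" "convex hull F" "uh F" P] P polyk_cont[OF P(1)] by simp
  qed
  have reidx: "\<And>G. bdry_pair T G = (\<Sum>F\<in>Fh T. \<Sum>E\<in>elems T F. face_int F (G E F))"
  proof -
    fix G :: "(real^'d) set \<Rightarrow> (real^'d) set \<Rightarrow> real^'d \<Rightarrow> real"
    have "bdry_pair T G = (\<Sum>E\<in>T. \<Sum>F\<in>{F. F \<in> Fh T \<and> F \<in> faces E}. face_int F (G E F))"
      unfolding bdry_pair_def
    proof (rule sum.cong[OF refl])
      fix E assume "E \<in> T"
      then have "{F. F \<in> Fh T \<and> F \<in> faces E} = faces E" using facesFh by blast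
      then show "(\<Sum>F\<in>faces E. face_int F (G E F)) = (\<Sum>F\<in>{F. F \<in> Fh T \<and> F \<in> faces E}. face_int F (G E F))"
        by simp
    qed
    also have "\<dots> = (\<Sum>F\<in>Fh T. \<Sum>E\<in>{E. E \<in> T \<and> F \<in> faces E}. face_int F (G E F))"
      by (rule sum.swap_restrict[OF mesh_fin finFh])
    finally show "bdry_pair T G = (\<Sum>F\<in>Fh T. \<Sum>E\<in>elems T F. face_int F (G E F))"
      unfolding elems_def by simp
  qed
  have H: "\<And>F y. F \<in> Fi T \<Longrightarrow> y \<in> convex hull F \<Longrightarrow>
     (\<Sum>E\<in>elems T F. - (kgrad kappa u E y \<bullet> nrm E F) + ?tau E F * (u E y - uh F y)) = 0"
  proof -
    fix F y assume F: "F \<in> Fi T" and y: "y \<in> convex hull F"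
    have FF: "F \<in> Fh T" using FiFh[OF F] .
    have gF: "goodF F" using good[OF FF] .
    have nb: "F \<notin> Fb T" using FiFb[OF F] .
    obtain P where P: "polyk k P" "\<forall>x\<in>convex hull F. uh F x = P x" using uhP[OF FF] by blast
    define Q where "Q = (\<lambda>x. \<Sum>E\<in>elems T F. - (kgrad kappa u E x \<bullet> nrm E F) + ?tau E F * (u E x - P x))"
    have polyQ: "polyk k Q" unfolding Q_def
    proof (rule polyk_sum[OF finEl])
      fix E assume "E \<in> elems T F"
      then have ET: "E \<in> T" using elemsD by blast
      have "polyk k (\<lambda>x. kgrad kappa u E x \<bullet> nrm E F)"
        unfolding kgrad_eq by (rule polyk_kgrad_dot[OF polyU[OF ET]])
      then show "polyk k (\<lambda>x. - (kgrad kappa u E x \<bullet> nrm E F) + ?tau E F * (u E x - P x))"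
        by (intro polyk_add polyk_neg polyk_scale polyk_diff polyU[OF ET] P(1))
    qed
    have contQ: "continuous_on S Q" for S by (rule polyk_cont[OF polyQ])
    define v0 :: "(real^'d) set \<Rightarrow> real^'d \<Rightarrow> real" where "v0 = (\<lambda>E x. 0)"
    define vh0 :: "(real^'d) set \<Rightarrow> real^'d \<Rightarrow> real" where "vh0 = (\<lambda>G x. if G = F then Q x else 0)"
    have Vv0: "Vh k T v0" unfolding Vh_def v0_def using polyk_zero by blast
    have Vvh0: "Vhat k T vh0" unfolding Vhat_def
    proof (intro ballI conjI impI)
      fix G assume G: "G \<in> Fh T"
      show "\<exists>p. polyk k p \<and> (\<forall>x\<in>convex hull G. vh0 G x = p x)"
      proof (cases "G = F")
        case True then show ?thesis using polyQ unfolding vh0_def by auto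
      next
        case False then show ?thesis using polyk_zero unfolding vh0_def by auto
      qed
    next
      fix G x assume "G \<in> Fh T" "G \<in> Fb T" "x \<in> convex hull G"
      then have "G \<noteq> F" using nb by blast
      then show "vh0 G x = 0" unfolding vh0_def by simp
    qed
    have "aH T kappa ?tau eps u uh v0 vh0 = (\<Sum>E\<in>T. integral (convex hull E) (\<lambda>x. f x * v0 E x))"
      using solves Vv0 Vvh0 by blast
    also have "\<dots> = 0" unfolding v0_def by simp
    finally have aH0: "aH T kappa ?tau eps u uh v0 vh0 = 0" .
    have vol: "(\<Sum>E\<in>T. integral (convex hull E) (\<lambda>x. kgrad kappa u E x \<bullet> grad (v0 E) x)) = 0"
      unfolding v0_def by (simp add: grad_zero)
    have epst: "bdry_pair T (\<lambda>E G x. (- kgrad kappa v0 E x) \<bullet> hjump u uh E G x) = 0"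
      unfolding v0_def kgrad_def by (simp add: grad_zero bdry_pair_zero)
    have pw: "(\<Sum>E\<in>elems T F. sighat kappa ?tau u uh E F x \<bullet> hjump v0 vh0 E F x) = - (Q x * Q x)"
      if x: "x \<in> convex hull F" for x
    proof -
      have "sighat kappa ?tau u uh E F x \<bullet> hjump v0 vh0 E F x
          = - Q x * (- (kgrad kappa u E x \<bullet> nrm E F) + ?tau E F * (u E x - P x))"
        if E: "E \<in> elems T F" for E
      proof -
        have n: "nrm E F \<bullet> nrm E F = 1" using nn elemsD[OF E] by blast
        show ?thesis using n P(2) x unfolding sighat_def hjump_def v0_def vh0_def
          by (simp add: inner_add_left inner_minus_left inner_scaleR_left inner_scaleR_right algebra_simps)
      qed
      then have "(\<Sum>E\<in>elems T F. sighat kappa ?tau u uh E F x \<bullet> hjump v0 vh0 E F x)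
          = (\<Sum>E\<in>elems T F. - Q x * (- (kgrad kappa u E x \<bullet> nrm E F) + ?tau E F * (u E x - P x)))"
        by (rule sum.cong[OF refl])
      also have "\<dots> = - Q x * Q x" unfolding Q_def by (simp add: sum_distrib_left)
      finally show ?thesis by simp
    qed
    have mid: "bdry_pair T (\<lambda>E G x. sighat kappa ?tau u uh E G x \<bullet> hjump v0 vh0 E G x) = - face_int F (\<lambda>x. Q x * Q x)"
    proof -
      have "bdry_pair T (\<lambda>E G x. sighat kappa ?tau u uh E G x \<bullet> hjump v0 vh0 E G x)
         = (\<Sum>G\<in>Fh T. \<Sum>E\<in>elems T G. face_int G (\<lambda>x. sighat kappa ?tau u uh E G x \<bullet> hjump v0 vh0 E G x))"
        by (rule reidx)
      also have "\<dots> = (\<Sum>G\<in>Fh T. if G = F then (\<Sum>E\<in>elems T F. face_int F (\<lambda>x. sighat kappa ?tau u uh E F x \<bullet> hjump v0 vh0 E F x)) else 0)"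
      proof (rule sum.cong[OF refl])
        fix G assume "G \<in> Fh T"
        show "(\<Sum>E\<in>elems T G. face_int G (\<lambda>x. sighat kappa ?tau u uh E G x \<bullet> hjump v0 vh0 E G x))
          = (if G = F then (\<Sum>E\<in>elems T F. face_int F (\<lambda>x. sighat kappa ?tau u uh E F x \<bullet> hjump v0 vh0 E F x)) else 0)"
        proof (cases "G = F")
          case False
          then have "hjump v0 vh0 E G x = 0" for E x unfolding hjump_def v0_def vh0_def by simp
          then show ?thesis using False by (simp add: face_int_zero)
        qed simp
      qed
      also have "\<dots> = (\<Sum>E\<in>elems T F. face_int F (\<lambda>x. sighat kappa ?tau u uh E F x \<bullet> hjump v0 vh0 E F x))"
        using FF finFh by (simp add: sum.delta)
      also have "\<dots> = face_int F (\<lambda>x. \<Sum>E\<in>elems T F. sighat kappa ?tau u uh E F x \<bullet> hjump v0 vh0 E F x)"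
      proof (rule face_int_sum[OF gF finEl, symmetric])
        fix E assume E: "E \<in> elems T F"
        then have ET: "E \<in> T" using elemsD by blast
        have c1: "continuous_on (convex hull F) (sighat kappa ?tau u uh E F)"
          by (rule cont_sighat) (rule contKU[OF ET], rule contU[OF ET], rule contUh[OF FF])
        have "vh0 F = Q" unfolding vh0_def by simp
        then have c2: "continuous_on (convex hull F) (hjump v0 vh0 E F)"
          by (intro cont_hjump) (auto simp: v0_def contQ)
        show "continuous_on (convex hull F) (\<lambda>x. sighat kappa ?tau u uh E F x \<bullet> hjump v0 vh0 E F x)"
          by (intro continuous_on_inner c1 c2)
      qed
      also have "\<dots> = face_int F (\<lambda>x. - (Q x * Q x))"
        by (rule face_int_cong[OF gF pw])
      also have "\<dots> = - face_int F (\<lambda>x. Q x * Q x)" by (rule face_int_neg)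
      finally show ?thesis .
    qed
    have "face_int F (\<lambda>x. Q x * Q x) = 0" using aH0 vol epst mid unfolding aH_def by simp
    then have "\<forall>y\<in>convex hull F. Q y = 0" by (rule face_int_sq_zero[OF gF contQ])
    then have "Q y = 0" using y by blast
    moreover have "uh F y = P y" using P(2) y by blast
    ultimately show "(\<Sum>E\<in>elems T F. - (kgrad kappa u E y \<bullet> nrm E F) + ?tau E F * (u E y - uh F y)) = 0"
      unfolding Q_def by simp
  qed
  show ?thesis
  proof (intro allI impI)
    fix v vh assume vv: "Vh k T v \<and> Vhat k T vh"
    have polyV: "\<And>E. E \<in> T \<Longrightarrow> polyk k (v E)" using vv unfolding Vh_def by blast
    have vhP: "\<And>F. F \<in> Fh T \<Longrightarrow> \<exists>P. polyk k P \<and> (\<forall>x\<in>convex hull F. vh F x = P x)"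
      using vv unfolding Vhat_def by blast
    have vhB: "\<And>F x. F \<in> Fb T \<Longrightarrow> x \<in> convex hull F \<Longrightarrow> vh F x = 0"
      using vv FbFh unfolding Vhat_def by blast
    have contV: "\<And>E S. E \<in> T \<Longrightarrow> continuous_on S (v E)" using polyV polyk_cont by blast
    have contKV: "\<And>E S. E \<in> T \<Longrightarrow> continuous_on S (kgrad kappa v E)"
      unfolding kgrad_eq using polyV cont_Kgrad by blast
    have contVh: "\<And>F. F \<in> Fh T \<Longrightarrow> continuous_on (convex hull F) (vh F)"
    proof -
      fix F assume "F \<in> Fh T"
      then obtain P where P: "polyk k P" "\<forall>x\<in>convex hull F. vh F x = P x" using vhP by blast
      show "continuous_on (convex hull F) (vh F)"
        using continuous_on_cong[of "convex hull F" "convex hull F" "vh F" P] P polyk_cont[OF P(1)] by simp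
    qed
    have elT: "\<And>E F. E \<in> elems T F \<Longrightarrow> E \<in> T" using elemsD by blast
    have sumFi: "(\<Sum>F\<in>Fi T. g F) = (\<Sum>F\<in>Fh T. if F \<in> Fi T then g F else 0)"
      for g :: "(real^'d) set \<Rightarrow> real"
    proof -
      have "{F \<in> Fh T. F \<in> Fi T} = Fi T" using FiFh by blast
      then show "(\<Sum>F\<in>Fi T. g F) = (\<Sum>F\<in>Fh T. if F \<in> Fi T then g F else 0)"
        using sum.inter_filter[OF finFh, of g "\<lambda>F. F \<in> Fi T"] by simp
    qed
    show "bdry_pair T (\<lambda>E F x. (- kgrad kappa v E x) \<bullet> hjump u uh E F x)
        = - (\<Sum>F\<in>Fh T. face_int F (\<lambda>x.
               mean_star T (tauf \<alpha>0 CT kappa) F (kgrad kappa v) x \<bullet> jumpS T F u x))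
          - (\<Sum>F\<in>Fi T. face_int F (\<lambda>x.
               rho1 T (tauf \<alpha>0 CT kappa) F * jumpV T F (kgrad kappa u) x * jumpV T F (kgrad kappa v) x))
    \<and> bdry_pair T (\<lambda>E F x. sighat kappa (tauf \<alpha>0 CT kappa) u uh E F x \<bullet> hjump v vh E F x)
        = - (\<Sum>F\<in>Fh T. face_int F (\<lambda>x.
               mean_star T (tauf \<alpha>0 CT kappa) F (kgrad kappa u) x \<bullet> jumpS T F v x))
          + (\<Sum>F\<in>Fh T. face_int F (\<lambda>x.
               rho0 T (tauf \<alpha>0 CT kappa) F * (jumpS T F u x \<bullet> jumpS T F v x)))"
    proof
      show "bdry_pair T (\<lambda>E F x. (- kgrad kappa v E x) \<bullet> hjump u uh E F x)
        = - (\<Sum>F\<in>Fh T. face_int F (\<lambda>x.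
               mean_star T (tauf \<alpha>0 CT kappa) F (kgrad kappa v) x \<bullet> jumpS T F u x))
          - (\<Sum>F\<in>Fi T. face_int F (\<lambda>x.
               rho1 T (tauf \<alpha>0 CT kappa) F * jumpV T F (kgrad kappa u) x * jumpV T F (kgrad kappa v) x))"
      proof -
        have "bdry_pair T (\<lambda>E F x. (- kgrad kappa v E x) \<bullet> hjump u uh E F x)
          = (\<Sum>F\<in>Fh T. \<Sum>E\<in>elems T F. face_int F (\<lambda>x. (- kgrad kappa v E x) \<bullet> hjump u uh E F x))"
          by (rule reidx)
        also have "\<dots> = (\<Sum>F\<in>Fh T. - face_int F (\<lambda>x. mean_star T ?tau F (kgrad kappa v) x \<bullet> jumpS T F u x)
           - (if F \<in> Fi T then face_int F (\<lambda>x. rho1 T ?tau F * jumpV T F (kgrad kappa u) x * jumpV T F (kgrad kappa v) x) else 0))"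
        proof (rule sum.cong[OF refl])
          fix F assume FF: "F \<in> Fh T"
          have gF: "goodF F" using good[OF FF] .
          have sumEq: "(\<Sum>E\<in>elems T F. face_int F (\<lambda>x. (- kgrad kappa v E x) \<bullet> hjump u uh E F x))
             = face_int F (\<lambda>x. \<Sum>E\<in>elems T F. (- kgrad kappa v E x) \<bullet> hjump u uh E F x)"
          proof (rule face_int_sum[OF gF finEl, symmetric])
            fix E assume "E \<in> elems T F"
            then have ET: "E \<in> T" by (rule elT)
            show "continuous_on (convex hull F) (\<lambda>x. (- kgrad kappa v E x) \<bullet> hjump u uh E F x)"
              by (intro continuous_on_inner continuous_on_minus contKV[OF ET] cont_hjump contU[OF ET] contUh[OF FF])
          qed
          have cA: "continuous_on (convex hull F) (\<lambda>x. - (mean_star T ?tau F (kgrad kappa v) x \<bullet> jumpS T F u x))"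
            by (intro continuous_on_minus continuous_on_inner cont_mean_star cont_jumpS contKV contU elT)
          have cB: "continuous_on (convex hull F) (\<lambda>x. - (rho1 T ?tau F * jumpV T F (kgrad kappa u) x * jumpV T F (kgrad kappa v) x))"
            by (intro continuous_on_minus continuous_on_mult continuous_on_const cont_jumpV contKV contKU elT)
          show "(\<Sum>E\<in>elems T F. face_int F (\<lambda>x. (- kgrad kappa v E x) \<bullet> hjump u uh E F x))
             = - face_int F (\<lambda>x. mean_star T ?tau F (kgrad kappa v) x \<bullet> jumpS T F u x)
           - (if F \<in> Fi T then face_int F (\<lambda>x. rho1 T ?tau F * jumpV T F (kgrad kappa u) x * jumpV T F (kgrad kappa v) x) else 0)"
            using split[OF FF]
          proof (elim disjE conjE exE)
            fix E assume Fb: "F \<in> Fb T" and el: "elems T F = {E}"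
            have nFi: "F \<notin> Fi T" using Fb FiFb by blast
            have pw: "(\<Sum>E\<in>elems T F. (- kgrad kappa v E x) \<bullet> hjump u uh E F x)
                = - (mean_star T ?tau F (kgrad kappa v) x \<bullet> jumpS T F u x)" if x: "x \<in> convex hull F" for x
              using uhB[OF Fb x] Fb unfolding el hjump_def mean_star_def jumpS_def
              by (simp add: inner_minus_left)
            have "face_int F (\<lambda>x. \<Sum>E\<in>elems T F. (- kgrad kappa v E x) \<bullet> hjump u uh E F x)
              = face_int F (\<lambda>x. - (mean_star T ?tau F (kgrad kappa v) x \<bullet> jumpS T F u x))"
              by (rule face_int_cong[OF gF pw])
            also have "\<dots> = - face_int F (\<lambda>x. mean_star T ?tau F (kgrad kappa v) x \<bullet> jumpS T F u x)"
              by (rule face_int_neg)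
            finally show ?thesis unfolding sumEq using nFi by simp
          next
            fix E1 E2 assume Fi: "F \<in> Fi T" and nFb: "F \<notin> Fb T" and el: "elems T F = {E1, E2}"
              and ne: "E1 \<noteq> E2" and o: "nrm E2 F = - nrm E1 F"
            have E1: "E1 \<in> T" "F \<in> faces E1" using elemsD[of E1 F] el by auto
            have E2: "E2 \<in> T" "F \<in> faces E2" using elemsD[of E2 F] el by auto
            have nn1: "nrm E1 F \<bullet> nrm E1 F = 1" by (rule nn[OF E1])
            have St: "?tau E1 F + ?tau E2 F \<noteq> 0" using tpos[OF E1] tpos[OF E2] by simp
            have pw: "(\<Sum>E\<in>elems T F. (- kgrad kappa v E x) \<bullet> hjump u uh E F x)
                = - (mean_star T ?tau F (kgrad kappa v) x \<bullet> jumpS T F u x)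
                  + - (rho1 T ?tau F * jumpV T F (kgrad kappa u) x * jumpV T F (kgrad kappa v) x)"
              if x: "x \<in> convex hull F" for x
            proof -
              have HY: "(- (kgrad kappa u E1 x \<bullet> nrm E1 F) + ?tau E1 F * (u E1 x - uh F x))
                + (- (kgrad kappa u E2 x \<bullet> (- nrm E1 F)) + ?tau E2 F * (u E2 x - uh F x)) = 0"
                using H[OF Fi x] unfolding el o[symmetric] using ne by simp
              have L: "(\<Sum>E\<in>elems T F. (- kgrad kappa v E x) \<bullet> hjump u uh E F x)
                = (- kgrad kappa v E1 x) \<bullet> ((u E1 x - uh F x) *\<^sub>R nrm E1 F)
                  + (- kgrad kappa v E2 x) \<bullet> ((u E2 x - uh F x) *\<^sub>R (- nrm E1 F))"
                unfolding el hjump_def o[symmetric] using ne by simp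
              have A: "mean_star T ?tau F (kgrad kappa v) x \<bullet> jumpS T F u x
                = ((1 - ?tau E1 F / (?tau E1 F + ?tau E2 F)) *\<^sub>R kgrad kappa v E1 x
                   + (1 - ?tau E2 F / (?tau E1 F + ?tau E2 F)) *\<^sub>R kgrad kappa v E2 x)
                  \<bullet> (u E1 x *\<^sub>R nrm E1 F + u E2 x *\<^sub>R (- nrm E1 F))"
                unfolding mean_star_def jumpS_def el o[symmetric] using ne nFb by simp
              have B: "rho1 T ?tau F * jumpV T F (kgrad kappa u) x * jumpV T F (kgrad kappa v) x
                = 1 / (?tau E1 F + ?tau E2 F) * (kgrad kappa u E1 x \<bullet> nrm E1 F + kgrad kappa u E2 x \<bullet> (- nrm E1 F))
                  * (kgrad kappa v E1 x \<bullet> nrm E1 F + kgrad kappa v E2 x \<bullet> (- nrm E1 F))"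
                unfolding rho1_def jumpV_def el o[symmetric] using ne by simp
              show ?thesis unfolding L A B
                using vec1[OF nn1 St HY, of "kgrad kappa v E1 x" "kgrad kappa v E2 x"] by simp
            qed
            have "face_int F (\<lambda>x. \<Sum>E\<in>elems T F. (- kgrad kappa v E x) \<bullet> hjump u uh E F x)
              = face_int F (\<lambda>x. - (mean_star T ?tau F (kgrad kappa v) x \<bullet> jumpS T F u x)
                  + - (rho1 T ?tau F * jumpV T F (kgrad kappa u) x * jumpV T F (kgrad kappa v) x))"
              by (rule face_int_cong[OF gF pw])
            also have "\<dots> = face_int F (\<lambda>x. - (mean_star T ?tau F (kgrad kappa v) x \<bullet> jumpS T F u x))
                  + face_int F (\<lambda>x. - (rho1 T ?tau F * jumpV T F (kgrad kappa u) x * jumpV T F (kgrad kappa v) x))"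
              by (rule face_int_add[OF gF cA cB])
            finally show ?thesis unfolding sumEq using Fi by (simp add: face_int_neg)
          qed
        qed
        also have "\<dots> = - (\<Sum>F\<in>Fh T. face_int F (\<lambda>x. mean_star T ?tau F (kgrad kappa v) x \<bullet> jumpS T F u x))
           - (\<Sum>F\<in>Fh T. if F \<in> Fi T then face_int F (\<lambda>x. rho1 T ?tau F * jumpV T F (kgrad kappa u) x * jumpV T F (kgrad kappa v) x) else 0)"
          by (simp add: sum_subtractf sum_negf)
        also have "\<dots> = - (\<Sum>F\<in>Fh T. face_int F (\<lambda>x. mean_star T ?tau F (kgrad kappa v) x \<bullet> jumpS T F u x))
           - (\<Sum>F\<in>Fi T. face_int F (\<lambda>x. rho1 T ?tau F * jumpV T F (kgrad kappa u) x * jumpV T F (kgrad kappa v) x))"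
          unfolding sumFi ..
        finally show ?thesis .
      qed
    next
      show "bdry_pair T (\<lambda>E F x. sighat kappa (tauf \<alpha>0 CT kappa) u uh E F x \<bullet> hjump v vh E F x)
        = - (\<Sum>F\<in>Fh T. face_int F (\<lambda>x.
               mean_star T (tauf \<alpha>0 CT kappa) F (kgrad kappa u) x \<bullet> jumpS T F v x))
          + (\<Sum>F\<in>Fh T. face_int F (\<lambda>x.
               rho0 T (tauf \<alpha>0 CT kappa) F * (jumpS T F u x \<bullet> jumpS T F v x)))"
      proof -
        have "bdry_pair T (\<lambda>E F x. sighat kappa ?tau u uh E F x \<bullet> hjump v vh E F x)
          = (\<Sum>F\<in>Fh T. \<Sum>E\<in>elems T F. face_int F (\<lambda>x. sighat kappa ?tau u uh E F x \<bullet> hjump v vh E F x))"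
          by (rule reidx)
        also have "\<dots> = (\<Sum>F\<in>Fh T. - face_int F (\<lambda>x. mean_star T ?tau F (kgrad kappa u) x \<bullet> jumpS T F v x)
           + face_int F (\<lambda>x. rho0 T ?tau F * (jumpS T F u x \<bullet> jumpS T F v x)))"
        proof (rule sum.cong[OF refl])
          fix F assume FF: "F \<in> Fh T"
          have gF: "goodF F" using good[OF FF] .
          have sumEq: "(\<Sum>E\<in>elems T F. face_int F (\<lambda>x. sighat kappa ?tau u uh E F x \<bullet> hjump v vh E F x))
             = face_int F (\<lambda>x. \<Sum>E\<in>elems T F. sighat kappa ?tau u uh E F x \<bullet> hjump v vh E F x)"
          proof (rule face_int_sum[OF gF finEl, symmetric])
            fix E assume "E \<in> elems T F"
            then have ET: "E \<in> T" by (rule elT)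
            have c1: "continuous_on (convex hull F) (sighat kappa ?tau u uh E F)"
              by (rule cont_sighat) (rule contKU[OF ET], rule contU[OF ET], rule contUh[OF FF])
            have c2: "continuous_on (convex hull F) (hjump v vh E F)"
              by (rule cont_hjump) (rule contV[OF ET], rule contVh[OF FF])
            show "continuous_on (convex hull F) (\<lambda>x. sighat kappa ?tau u uh E F x \<bullet> hjump v vh E F x)"
              by (intro continuous_on_inner c1 c2)
          qed
          have cA: "continuous_on (convex hull F) (\<lambda>x. - (mean_star T ?tau F (kgrad kappa u) x \<bullet> jumpS T F v x))"
            by (intro continuous_on_minus continuous_on_inner cont_mean_star cont_jumpS contKU contV elT)
          have cR: "continuous_on (convex hull F) (\<lambda>x. rho0 T ?tau F * (jumpS T F u x \<bullet> jumpS T F v x))"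
            by (intro continuous_on_mult continuous_on_const continuous_on_inner cont_jumpS contU contV elT)
          have pw: "(\<Sum>E\<in>elems T F. sighat kappa ?tau u uh E F x \<bullet> hjump v vh E F x)
                = - (mean_star T ?tau F (kgrad kappa u) x \<bullet> jumpS T F v x)
                  + rho0 T ?tau F * (jumpS T F u x \<bullet> jumpS T F v x)" if x: "x \<in> convex hull F" for x
            using split[OF FF]
          proof (elim disjE conjE exE)
            fix E assume Fb: "F \<in> Fb T" and el: "elems T F = {E}"
            have ET: "E \<in> T" "F \<in> faces E" using elemsD[of E F] el by auto
            have n: "nrm E F \<bullet> nrm E F = 1" by (rule nn[OF ET])
            show ?thesis
              using uhB[OF Fb x] vhB[OF Fb x] Fb n unfolding el sighat_def hjump_def mean_star_def jumpS_def rho0_def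
              by (simp add: inner_add_left inner_minus_left inner_scaleR_left inner_scaleR_right algebra_simps)
          next
            fix E1 E2 assume Fi: "F \<in> Fi T" and nFb: "F \<notin> Fb T" and el: "elems T F = {E1, E2}"
              and ne: "E1 \<noteq> E2" and o: "nrm E2 F = - nrm E1 F"
            have E1: "E1 \<in> T" "F \<in> faces E1" using elemsD[of E1 F] el by auto
            have E2: "E2 \<in> T" "F \<in> faces E2" using elemsD[of E2 F] el by auto
            have nn1: "nrm E1 F \<bullet> nrm E1 F = 1" by (rule nn[OF E1])
            have St: "?tau E1 F + ?tau E2 F \<noteq> 0" using tpos[OF E1] tpos[OF E2] by simp
            have HY: "(- (kgrad kappa u E1 x \<bullet> nrm E1 F) + ?tau E1 F * (u E1 x - uh F x))
              + (- (kgrad kappa u E2 x \<bullet> (- nrm E1 F)) + ?tau E2 F * (u E2 x - uh F x)) = 0"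
              using H[OF Fi x] unfolding el o[symmetric] using ne by simp
            have L: "(\<Sum>E\<in>elems T F. sighat kappa ?tau u uh E F x \<bullet> hjump v vh E F x)
              = (- kgrad kappa u E1 x + ?tau E1 F *\<^sub>R ((u E1 x - uh F x) *\<^sub>R nrm E1 F)) \<bullet> ((v E1 x - vh F x) *\<^sub>R nrm E1 F)
                + (- kgrad kappa u E2 x + ?tau E2 F *\<^sub>R ((u E2 x - uh F x) *\<^sub>R (- nrm E1 F))) \<bullet> ((v E2 x - vh F x) *\<^sub>R (- nrm E1 F))"
              unfolding el sighat_def hjump_def o[symmetric] using ne by simp
            have A: "mean_star T ?tau F (kgrad kappa u) x \<bullet> jumpS T F v x
              = ((1 - ?tau E1 F / (?tau E1 F + ?tau E2 F)) *\<^sub>R kgrad kappa u E1 x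
                 + (1 - ?tau E2 F / (?tau E1 F + ?tau E2 F)) *\<^sub>R kgrad kappa u E2 x)
                \<bullet> (v E1 x *\<^sub>R nrm E1 F + v E2 x *\<^sub>R (- nrm E1 F))"
              unfolding mean_star_def jumpS_def el o[symmetric] using ne nFb by simp
            have R: "rho0 T ?tau F * (jumpS T F u x \<bullet> jumpS T F v x)
              = ?tau E1 F * ?tau E2 F / (?tau E1 F + ?tau E2 F)
                * ((u E1 x *\<^sub>R nrm E1 F + u E2 x *\<^sub>R (- nrm E1 F)) \<bullet> (v E1 x *\<^sub>R nrm E1 F + v E2 x *\<^sub>R (- nrm E1 F)))"
              unfolding rho0_def jumpS_def el o[symmetric] using ne nFb by simp
            show ?thesis unfolding L A R
              by (rule vec2[OF nn1 St HY])
          qed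
          have "face_int F (\<lambda>x. \<Sum>E\<in>elems T F. sighat kappa ?tau u uh E F x \<bullet> hjump v vh E F x)
            = face_int F (\<lambda>x. - (mean_star T ?tau F (kgrad kappa u) x \<bullet> jumpS T F v x)
                  + rho0 T ?tau F * (jumpS T F u x \<bullet> jumpS T F v x))"
            by (rule face_int_cong[OF gF pw])
          also have "\<dots> = face_int F (\<lambda>x. - (mean_star T ?tau F (kgrad kappa u) x \<bullet> jumpS T F v x))
                  + face_int F (\<lambda>x. rho0 T ?tau F * (jumpS T F u x \<bullet> jumpS T F v x))"
            by (rule face_int_add[OF gF cA cR])
          finally show "(\<Sum>E\<in>elems T F. face_int F (\<lambda>x. sighat kappa ?tau u uh E F x \<bullet> hjump v vh E F x))
             = - face_int F (\<lambda>x. mean_star T ?tau F (kgrad kappa u) x \<bullet> jumpS T F v x)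
               + face_int F (\<lambda>x. rho0 T ?tau F * (jumpS T F u x \<bullet> jumpS T F v x))"
            unfolding sumEq by (simp add: face_int_neg)
        qed
        also have "\<dots> = - (\<Sum>F\<in>Fh T. face_int F (\<lambda>x. mean_star T ?tau F (kgrad kappa u) x \<bullet> jumpS T F v x))
           + (\<Sum>F\<in>Fh T. face_int F (\<lambda>x. rho0 T ?tau F * (jumpS T F u x \<bullet> jumpS T F v x)))"
          by (simp add: sum.distrib sum_negf sum_subtractf)
        finally show ?thesis .
      qed
    qed
  qed
qed

end
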